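(* Let $T\in S(\lambda,\mu)$ be any semistandard Young tableau and let $m_T=\deg\chi^T(q)$. Then $\chi^T(q)$ is a palindromic polynomial; that is, $|S_k^T(\lambda,\mu)|=|S_{m_T-k}^T(\lambda,\mu)|$ for all $k$.
   Context: A shape is a partition $\lambda=(\lambda_1\ge\dots\ge\lambda_m\ge1)$ with $\lambda_i$ left-justified boxes in row $i$. A content is $\mu=(\mu_1,\dots,\mu_M)$, all $\mu_i\ge1$, $\sum\mu_i=\sum\lambda_i$. A filling of shape $\lambda$ and content $\mu$ assigns positive integers so that value $v$ occurs exactly $\mu_v$ times; row-standard means strictly increasing along rows. $S(\lambda,\mu)$: row-standard fillings with weakly increasing columns. Inversion pairs of a row-standard $\tau$: for a box $c$ and $r\ge1$ let $c^{(r)}$ be the box $r$ positions to its right, if it exists. For distinct boxes $c,c'$ in the same column with $\tau(c)<\tau(c')$, let $r\ge1$ be least such that one of $c^{(r)},c'^{(r)}$ does not exist or both exist with $\tau(c^{(r)})\ne\tau(c'^{(r)})$. $(c,c')$ is an inversion pair if either (one does not exist and $c$ lies below $c'$) or (both exist and $\tau(c^{(r)})>\tau(c'^{(r)})$). $S_k(\lambda,\mu)$: row-standard fillings with exactly $k$ inversion pairs (counted as pairs of boxes). $\mathrm{st}(\tau)$: sort each column weakly increasingly; $S_k^T(\lambda,\mu)=\{\tau\in S_k(\lambda,\mu):\mathrm{st}(\tau)=T\}$; $\chi^T(q)=\sum_k|S_k^T(\lambda,\mu)|q^k$. *)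

theory Defs
  imports Main "HOL-Computational_Algebra.Polynomial"
begin

text \<open>Boxes are pairs (row, column), 0-indexed, rows numbered from the top.
  A shape is a list of row lengths; a content is a list mu with mu ! (v-1) = multiplicity of v.\<close>

definition is_shape :: "nat list \<Rightarrow> bool" where
  "is_shape lam \<longleftrightarrow> sorted_wrt (\<ge>) lam \<and> (\<forall>x\<in>set lam. x \<ge> 1)"

definition is_content :: "nat list \<Rightarrow> nat list \<Rightarrow> bool" where
  "is_content lam mu \<longleftrightarrow> (\<forall>x\<in>set mu. x \<ge> 1) \<and> sum_list mu = sum_list lam"

definition box :: "nat list \<Rightarrow> nat \<times> nat \<Rightarrow> bool" where
  "box lam c \<longleftrightarrow> fst c < length lam \<and> snd c < lam ! fst c"

definition boxes :: "nat list \<Rightarrow> (nat \<times> nat) set" where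
  "boxes lam = {c. box lam c}"

definition fillings :: "nat list \<Rightarrow> nat list \<Rightarrow> (nat \<times> nat \<Rightarrow> nat) set" where
  "fillings lam mu = {\<tau>. (\<forall>c. \<not> box lam c \<longrightarrow> \<tau> c = 0)
      \<and> (\<forall>c. box lam c \<longrightarrow> \<tau> c \<in> {1..length mu})
      \<and> (\<forall>v\<in>{1..length mu}. card {c. box lam c \<and> \<tau> c = v} = mu ! (v - 1))}"

definition row_standard :: "nat list \<Rightarrow> (nat \<times> nat \<Rightarrow> nat) \<Rightarrow> bool" where
  "row_standard lam \<tau> \<longleftrightarrow>
     (\<forall>i j. box lam (i, Suc j) \<longrightarrow> \<tau> (i, j) < \<tau> (i, Suc j))"

definition col_weak :: "nat list \<Rightarrow> (nat \<times> nat \<Rightarrow> nat) \<Rightarrow> bool" where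
  "col_weak lam \<tau> \<longleftrightarrow>
     (\<forall>i j. box lam (Suc i, j) \<longrightarrow> \<tau> (i, j) \<le> \<tau> (Suc i, j))"

definition SSYT :: "nat list \<Rightarrow> nat list \<Rightarrow> (nat \<times> nat \<Rightarrow> nat) set" where
  "SSYT lam mu = {\<tau> \<in> fillings lam mu. row_standard lam \<tau> \<and> col_weak lam \<tau>}"

definition right :: "nat \<Rightarrow> nat \<times> nat \<Rightarrow> nat \<times> nat" where
  "right r c = (fst c, snd c + r)"

definition differs :: "nat list \<Rightarrow> (nat \<times> nat \<Rightarrow> nat) \<Rightarrow> nat \<times> nat \<Rightarrow> nat \<times> nat \<Rightarrow> nat \<Rightarrow> bool" where
  "differs lam \<tau> c c' r \<longleftrightarrow> \<not> box lam (right r c) \<or> \<not> box lam (right r c')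
      \<or> \<tau> (right r c) \<noteq> \<tau> (right r c')"

definition inv_pair :: "nat list \<Rightarrow> (nat \<times> nat \<Rightarrow> nat) \<Rightarrow> nat \<times> nat \<Rightarrow> nat \<times> nat \<Rightarrow> bool" where
  "inv_pair lam \<tau> c c' \<longleftrightarrow> box lam c \<and> box lam c' \<and> c \<noteq> c' \<and> snd c = snd c' \<and> \<tau> c < \<tau> c' \<and>
     (let r = (LEAST r. r \<ge> 1 \<and> differs lam \<tau> c c' r) in
        ((\<not> box lam (right r c) \<or> \<not> box lam (right r c')) \<and> fst c > fst c')
      \<or> (box lam (right r c) \<and> box lam (right r c') \<and> \<tau> (right r c) > \<tau> (right r c')))"

definition inv_count :: "nat list \<Rightarrow> (nat \<times> nat \<Rightarrow> nat) \<Rightarrow> nat" where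
  "inv_count lam \<tau> = card {(c, c'). inv_pair lam \<tau> c c'}"

definition S_k :: "nat list \<Rightarrow> nat list \<Rightarrow> nat \<Rightarrow> (nat \<times> nat \<Rightarrow> nat) set" where
  "S_k lam mu k = {\<tau> \<in> fillings lam mu. row_standard lam \<tau> \<and> inv_count lam \<tau> = k}"

text \<open>Column sorting: column j occupies rows 0..h_j-1, h_j = number of rows of length > j.\<close>
definition col_height :: "nat list \<Rightarrow> nat \<Rightarrow> nat" where
  "col_height lam j = length (filter (\<lambda>l. j < l) lam)"

definition st :: "nat list \<Rightarrow> (nat \<times> nat \<Rightarrow> nat) \<Rightarrow> (nat \<times> nat \<Rightarrow> nat)" where
  "st lam \<tau> = (\<lambda>(i, j). if box lam (i, j)
       then sort (map (\<lambda>i'. \<tau> (i', j)) [0..<col_height lam j]) ! i else 0)"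

definition S_k_T :: "nat list \<Rightarrow> nat list \<Rightarrow> (nat \<times> nat \<Rightarrow> nat) \<Rightarrow> nat \<Rightarrow> (nat \<times> nat \<Rightarrow> nat) set" where
  "S_k_T lam mu T k = {\<tau> \<in> S_k lam mu k. st lam \<tau> = T}"

text \<open>chi^T(q) = sum_k |S_k^T| q^k (inversion counts are bounded by the number of box pairs).\<close>
definition chi :: "nat list \<Rightarrow> nat list \<Rightarrow> (nat \<times> nat \<Rightarrow> nat) \<Rightarrow> nat poly" where
  "chi lam mu T = (\<Sum>k\<le>(sum_list lam)^2. monom (card (S_k_T lam mu T k)) k)"

end

theory Submission
  imports Defs "HOL-Library.List_Lexorder" "HOL-Library.Product_Lexorder" "HOL-Library.FuncSet"
begin


definition dist :: "'a set \<Rightarrow> ('a \<Rightarrow> nat) \<Rightarrow> nat \<Rightarrow> nat" where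
  "dist A s k = card {a\<in>A. s a = k}"

definition pal :: "(nat \<Rightarrow> nat) \<Rightarrow> nat \<Rightarrow> bool" where
  "pal g d \<longleftrightarrow> (\<forall>k\<le>d. g k = g (d - k)) \<and> (\<forall>k>d. g k = 0)"

lemma fibration:
  assumes "finite A" "finite B" "\<And>a. a \<in> A \<Longrightarrow> f a \<in> B"
    "\<And>a. a \<in> A \<Longrightarrow> t (f a) \<le> s a"
    "\<And>b i. b \<in> B \<Longrightarrow> card {a\<in>A. f a = b \<and> s a = t b + i} = g i"
  shows "dist A s k = (\<Sum>j\<le>k. dist B t j * g (k - j))"
proof -
  have "{a\<in>A. s a = k} = (\<Union>b\<in>{b\<in>B. t b \<le> k}. {a\<in>A. f a = b \<and> s a = t b + (k - t b)})"
    using assms(3,4) by force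
  hence "dist A s k = (\<Sum>b\<in>{b\<in>B. t b \<le> k}. card {a\<in>A. f a = b \<and> s a = t b + (k - t b)})"
    unfolding dist_def using assms(1,2)
    by (simp add: card_UN_disjoint disjoint_iff)
  also have "\<dots> = (\<Sum>b\<in>{b\<in>B. t b \<le> k}. g (k - t b))"
  proof (rule sum.cong[OF refl])
    fix b assume "b \<in> {b\<in>B. t b \<le> k}"
    thus "card {a\<in>A. f a = b \<and> s a = t b + (k - t b)} = g (k - t b)" using assms(5) by blast
  qed
  also have "\<dots> = (\<Sum>b\<in>B. (if t b \<le> k then g (k - t b) else 0))"
    using assms(2) by (simp add: sum.inter_filter)
  also have "\<dots> = (\<Sum>b\<in>B. \<Sum>j\<le>k. (if t b = j then g (k - j) else 0))"
    by (rule sum.cong) (auto simp: sum.delta)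
  also have "\<dots> = (\<Sum>j\<le>k. \<Sum>b\<in>B. (if t b = j then g (k - j) else 0))"
    by (rule sum.swap)
  also have "\<dots> = (\<Sum>j\<le>k. dist B t j * g (k - j))"
    unfolding dist_def using assms(2) by (simp add: sum.If_cases Int_def)
  finally show ?thesis .
qed

lemma pal_sym: "pal g d \<Longrightarrow> k \<le> d \<Longrightarrow> g k = g (d - k)"
  unfolding pal_def by blast
lemma pal_zero: "pal g d \<Longrightarrow> d < k \<Longrightarrow> g k = 0"
  unfolding pal_def by blast

lemma conv_pal:
  assumes "pal p d" "pal g e"
  shows "pal (\<lambda>k. \<Sum>j\<le>k. p j * g (k - j)) (d + e)"
proof -
  have P1: "p j = 0" if "j > d" for j using assms(1) that by (rule pal_zero)
  have G1: "g j = 0" if "j > e" for j using assms(2) that by (rule pal_zero)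
  have red: "(\<Sum>j\<le>k. p j * g (k - j)) = (\<Sum>j\<in>{j. j \<le> k \<and> j \<le> d \<and> k - j \<le> e}. p j * g (k - j))" for k
  proof (rule sum.mono_neutral_right)
    show "\<forall>i\<in>{..k} - {j. j \<le> k \<and> j \<le> d \<and> k - j \<le> e}. p i * g (k - i) = 0"
      using P1 G1 by (metis (no_types, lifting) Diff_iff atMost_iff mem_Collect_eq mult_is_0 not_le)
  qed auto
  show ?thesis unfolding pal_def
  proof safe
    fix k assume k: "k \<le> d + e"
    show "(\<Sum>j\<le>k. p j * g (k - j)) = (\<Sum>j\<le>d + e - k. p j * g (d + e - k - j))"
      unfolding red
    proof (rule sum.reindex_bij_witness[of _ "\<lambda>j. d - j" "\<lambda>j. d - j"])
      fix a assume "a \<in> {j. j \<le> k \<and> j \<le> d \<and> k - j \<le> e}"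
      thus "d - (d - a) = a" by simp
    next
      fix a assume "a \<in> {j. j \<le> k \<and> j \<le> d \<and> k - j \<le> e}"
      hence "a \<le> k" "a \<le> d" "k - a \<le> e" by auto
      thus "d - a \<in> {j. j \<le> d + e - k \<and> j \<le> d \<and> d + e - k - j \<le> e}" using k by (simp; linarith)
    next
      fix b assume "b \<in> {j. j \<le> d + e - k \<and> j \<le> d \<and> d + e - k - j \<le> e}"
      thus "d - (d - b) = b" by simp
    next
      fix b assume "b \<in> {j. j \<le> d + e - k \<and> j \<le> d \<and> d + e - k - j \<le> e}"
      hence "b \<le> d + e - k" "b \<le> d" "d + e - k - b \<le> e" by auto
      thus "d - b \<in> {j. j \<le> k \<and> j \<le> d \<and> k - j \<le> e}" using k by (simp; linarith)
    next
      fix a assume "a \<in> {j. j \<le> k \<and> j \<le> d \<and> k - j \<le> e}"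
      hence jj: "a \<le> k" "a \<le> d" "k - a \<le> e" by auto
      have a1: "k - a \<le> e" and a2: "d + e - k - (d - a) = e - (k - a)" using jj k by linarith+
      have "p (d - a) = p (d - (d - a))" using pal_sym[OF assms(1), of "d - a"] by simp
      hence "p (d - a) = p a" using jj by simp
      moreover have "g (d + e - k - (d - a)) = g (k - a)" using pal_sym[OF assms(2) a1] a2 by simp
      ultimately show "p (d - a) * g (d + e - k - (d - a)) = p a * g (k - a)" by simp
    qed
  next
    fix k assume "d + e < k"
    thus "(\<Sum>j\<le>k. p j * g (k - j)) = 0" unfolding red by (auto simp: P1 G1)
  qed
qed




fun bst :: "bool list \<Rightarrow> nat" where
  "bst [] = 0"
| "bst (c # cs) = (if c then length (filter Not cs) else 0) + bst cs"

lemma bst_append: "bst (xs @ ys) = bst xs + bst ys + length (filter id xs) * length (filter Not ys)"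
  by (induction xs) (auto simp: algebra_simps)

lemma bst_append_replicate_False: "bst (replicate P False @ cs) = bst cs"
  by (induction P) auto

lemma bst_rev: "bst (rev cs) + bst cs = length (filter id cs) * length (filter Not cs)"
  by (induction cs) (auto simp: bst_append algebra_simps rev_filter[symmetric] id_def)

definition qb :: "nat \<Rightarrow> nat \<Rightarrow> nat \<Rightarrow> nat" where
  "qb L m i = card {cs. length cs = L \<and> length (filter id cs) = m \<and> bst cs = i}"

lemma filter_Not_len: "length (filter Not cs) = length cs - length (filter id cs)"
proof -
  have "length (filter id cs) + length (filter (\<lambda>x. \<not> id x) cs) = length cs"
    by (rule sum_length_filter_compl)
  thus ?thesis by simp
qed

lemma len_filter_rev: "length (filter P (rev cs)) = length (filter P cs)"
  by (metis length_rev rev_filter)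

lemma bst_le: "length cs = L \<Longrightarrow> length (filter id cs) = m \<Longrightarrow> bst (rev cs) + bst cs = m * (L - m)"
  using bst_rev[of cs] filter_Not_len[of cs] by (simp add: mult.commute)

definition Cq :: "nat \<Rightarrow> nat \<Rightarrow> nat \<Rightarrow> bool list set" where
  "Cq L m i = {cs. length cs = L \<and> length (filter id cs) = m \<and> bst cs = i}"

lemma Cq_A: "k \<le> m * (L - m) \<Longrightarrow> cs \<in> Cq L m k \<Longrightarrow> rev cs \<in> Cq L m (m * (L - m) - k)"
proof -
  assume k: "k \<le> m * (L - m)" and cs: "cs \<in> Cq L m k"
  have l: "length cs = L" "length (filter id cs) = m" "bst cs = k" using cs unfolding Cq_def by auto
  have "bst (rev cs) + k = m * (L - m)" using bst_le[OF l(1,2)] l(3) by simp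
  hence "bst (rev cs) = m * (L - m) - k" by linarith
  thus ?thesis using l unfolding Cq_def by (simp add: len_filter_rev)
qed

lemma Cq_img: "k \<le> m * (L - m) \<Longrightarrow> rev ` Cq L m k = Cq L m (m * (L - m) - k)"
proof
  assume k: "k \<le> m * (L - m)"
  show "rev ` Cq L m k \<subseteq> Cq L m (m * (L - m) - k)" using Cq_A[OF k] by blast
  show "Cq L m (m * (L - m) - k) \<subseteq> rev ` Cq L m k"
  proof
    fix cs assume cs: "cs \<in> Cq L m (m * (L - m) - k)"
    have "rev cs \<in> Cq L m (m * (L - m) - (m * (L - m) - k))"
      by (rule Cq_A[OF _ cs]) simp
    hence "rev cs \<in> Cq L m k" using k by simp
    thus "cs \<in> rev ` Cq L m k" by (metis image_eqI rev_rev_ident)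
  qed
qed

lemma qb_pal: "pal (qb L m) (m * (L - m))"
  unfolding pal_def
proof (intro conjI allI impI)
  fix k assume k: "k \<le> m * (L - m)"
  have "card (rev ` Cq L m k) = card (Cq L m k)" by (rule card_image) (simp add: inj_on_def)
  show "qb L m k = qb L m (m * (L - m) - k)"
  proof -
    have "qb L m j = card (Cq L m j)" for j by (simp add: qb_def Cq_def)
    thus ?thesis using Cq_img[OF k] \<open>card (rev ` Cq L m k) = card (Cq L m k)\<close> by simp
  qed
next
  fix k assume k: "m * (L - m) < k"
  have "Cq L m k = {}"
  proof (rule equals0I)
    fix cs assume "cs \<in> Cq L m k"
    hence l: "length cs = L" "length (filter id cs) = m" "bst cs = k" unfolding Cq_def by auto
    show False using bst_le[OF l(1,2)] l(3) k by simp
  qed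
  thus "qb L m k = 0" unfolding qb_def by (simp add: Cq_def[symmetric])
qed

fun invw :: "nat list \<Rightarrow> nat" where
  "invw [] = 0"
| "invw (a # w) = length (filter (\<lambda>b. b < a) w) + invw w"

lemma inv_split:
  assumes "\<forall>y\<in>set w. y \<le> x"
  shows "invw w = invw (filter (\<lambda>y. y \<noteq> x) w) + bst (map (\<lambda>y. y = x) w)"
  using assms
proof (induction w)
  case (Cons a w)
  have 1: "filter (\<lambda>b. b < a) w = filter (\<lambda>b. b < a) (filter (\<lambda>y. y \<noteq> x) w)" if "a \<noteq> x"
    using that Cons.prems by (induction w) auto
  have 2: "length (filter (\<lambda>b. b < x) w) = length (filter Not (map (\<lambda>y. y = x) w))"
    using Cons.prems by (induction w) auto
  show ?case using Cons 1 2 by auto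
qed simp

fun merge :: "nat \<Rightarrow> bool list \<Rightarrow> nat list \<Rightarrow> nat list" where
  "merge x [] ys = []"
| "merge x (c # cs) ys = (if c then x # merge x cs ys else hd ys # merge x cs (tl ys))"

lemma merge_props:
  assumes "x \<notin> set ys" "length ys = length (filter Not cs)"
  shows "filter (\<lambda>y. y \<noteq> x) (merge x cs ys) = ys \<and> map (\<lambda>y. y = x) (merge x cs ys) = cs
     \<and> length (merge x cs ys) = length cs
     \<and> mset (merge x cs ys) = mset ys + replicate_mset (length (filter id cs)) x"
  using assms
proof (induction cs arbitrary: ys)
  case (Cons c cs)
  show ?case
  proof (cases c)
    case True thus ?thesis using Cons by auto
  next
    case False
    then obtain y ys' where ys: "ys = y # ys'" using Cons.prems by (cases ys) auto
    thus ?thesis using Cons False by auto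
  qed
qed simp

lemma merge_inv: "merge x (map (\<lambda>y. y = x) w) (filter (\<lambda>y. y \<noteq> x) w) = w"
  by (induction w) auto

lemma merge_prefix: "length ys \<ge> P \<Longrightarrow>
   merge x (replicate P False @ cs) ys = take P ys @ merge x cs (drop P ys)"
proof (induction P arbitrary: ys)
  case (Suc P)
  then obtain y ys' where "ys = y # ys'" by (cases ys) auto
  thus ?case using Suc by auto
qed simp




definition Wset :: "nat list \<Rightarrow> nat multiset \<Rightarrow> nat list set" where
  "Wset B M = {w. length w = length B \<and> mset w = M \<and> (\<forall>p<length B. w!p < B!p)}"

lemma Wset_finite: "finite (Wset B M)"
proof (rule finite_subset)
  show "Wset B M \<subseteq> {w. set w \<subseteq> set_mset M \<and> length w = length B}"
    unfolding Wset_def by auto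
  show "finite {w. set w \<subseteq> set_mset M \<and> length w = length B}"
    by (rule finite_lists_length_eq) simp
qed

lemma take_all_False:
  assumes "P \<le> length xs" "\<forall>p<P. \<not> xs ! p"
  shows "take P xs = replicate P False"
  using assms by (intro nth_equalityI) auto

lemma mset_split_max: "filter_mset (\<lambda>y. y \<noteq> x) M + replicate_mset (count M x) x = M"
  by (rule multiset_eqI) auto

lemma fiber_card:
  fixes B :: "nat list" and M :: "nat multiset" and x P m :: nat and w' :: "nat list"
  defines "h \<equiv> length B"
  assumes xmax: "\<forall>y\<in>#M. y \<le> x" and m: "m = count M x"
    and P1: "\<forall>p<P. B!p \<le> x" and P2: "\<forall>p. P \<le> p \<and> p < h \<longrightarrow> x < B!p" and Ph: "P \<le> h"
    and mh: "m \<le> h - P"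
    and w': "w' \<in> Wset (take P B @ replicate (h - P - m) (Suc x)) (filter_mset (\<lambda>y. y \<noteq> x) M)"
  shows "card {w\<in>Wset B M. filter (\<lambda>y. y \<noteq> x) w = w' \<and> invw w = invw w' + i} = qb (h - P) m i"
proof -
  let ?A = "{w\<in>Wset B M. filter (\<lambda>y. y \<noteq> x) w = w' \<and> invw w = invw w' + i}"
  let ?phi = "\<lambda>w. drop P (map (\<lambda>y. y = x) w)"
  let ?psi = "\<lambda>cs. merge x (replicate P False @ cs) w'"
  have lw': "length w' = h - m" and mw': "mset w' = filter_mset (\<lambda>y. y \<noteq> x) M"
    and bw': "\<forall>p<h - m. w'!p < (take P B @ replicate (h - P - m) (Suc x))!p"
  proof -
    have lB: "length (take P B @ replicate (h - P - m) (Suc x)) = h - m"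
      using mh Ph by (simp add: h_def)
    show "length w' = h - m" "mset w' = filter_mset (\<lambda>y. y \<noteq> x) M"
      "\<forall>p<h - m. w'!p < (take P B @ replicate (h - P - m) (Suc x))!p"
      using w' lB unfolding Wset_def by auto
  qed
  have sw': "set w' = set_mset (filter_mset (\<lambda>y. y \<noteq> x) M)" by (metis mw' set_mset_mset)
  have xw': "x \<notin> set w'" using sw' by simp
  have w'lt: "y < x" if "y \<in> set w'" for y
    using that sw' xmax by fastforce
  have A: "?phi w \<in> Cq (h - P) m i \<and> ?psi (?phi w) = w" if wA: "w \<in> ?A" for w
  proof -
    have lw: "length w = h" and mw: "mset w = M" and bw: "\<forall>p<h. w!p < B!p"
      and fw: "filter (\<lambda>y. y \<noteq> x) w = w'" and iw: "invw w = invw w' + i"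
      using wA unfolding Wset_def h_def by auto
    have wle: "\<forall>y\<in>set w. y \<le> x" using xmax mw by (metis set_mset_mset)
    have tk: "take P (map (\<lambda>y. y = x) w) = replicate P False"
    proof (rule take_all_False)
      show "P \<le> length (map (\<lambda>y. y = x) w)" using lw Ph by simp
      show "\<forall>p<P. \<not> map (\<lambda>y. y = x) w ! p"
      proof (intro allI impI)
        fix p assume p: "p < P"
        hence "w ! p < B ! p" "B ! p \<le> x" "p < length w" using bw P1 Ph lw by auto
        thus "\<not> map (\<lambda>y. y = x) w ! p" by simp
      qed
    qed
    have mapw: "map (\<lambda>y. y = x) w = replicate P False @ ?phi w"
      by (metis append_take_drop_id tk)
    have "?psi (?phi w) = w" using mapw fw merge_inv[of x w] by metis
    moreover have "length (?phi w) = h - P" using lw by simp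
    moreover have "length (filter id (?phi w)) = m"
    proof -
      have "length (filter id (map (\<lambda>y. y = x) w)) = count (mset w) x"
        by (induction w) auto
      moreover have "length (filter id (map (\<lambda>y. y = x) w)) = length (filter id (?phi w))"
        by (subst mapw) simp
      ultimately show ?thesis using mw m by simp
    qed
    moreover have "bst (?phi w) = i"
    proof -
      have "bst (map (\<lambda>y. y = x) w) = bst (?phi w)"
        by (subst mapw) (rule bst_append_replicate_False)
      thus ?thesis using inv_split[OF wle] fw iw by simp
    qed
    ultimately show ?thesis unfolding Cq_def by simp
  qed
  have B: "?psi cs \<in> ?A \<and> ?phi (?psi cs) = cs" if cs: "cs \<in> Cq (h - P) m i" for cs
  proof -
    have lcs: "length cs = h - P" and tcs: "length (filter id cs) = m" and bcs: "bst cs = i"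
      using cs unfolding Cq_def by auto
    have ncs: "length (filter Not cs) = h - P - m" using filter_Not_len[of cs] lcs tcs by simp
    have hyp: "length w' = length (filter Not (replicate P False @ cs))"
      using lw' ncs mh Ph by simp
    note mp = merge_props[OF xw' hyp]
    have len: "length (?psi cs) = h" using mp lcs Ph by simp
    have ms: "mset (?psi cs) = M" using mp mw' tcs m mset_split_max[of x M] by simp
    have ph: "?phi (?psi cs) = cs" using mp by simp
    have hyp2: "length (drop P w') = length (filter Not cs)" using lw' ncs by simp
    have split: "?psi cs = take P w' @ merge x cs (drop P w')"
      by (rule merge_prefix) (use lw' mh Ph in simp)
    have bnd: "?psi cs ! p < B ! p" if p: "p < h" for p
    proof (cases "p < P")
      case True
      have "take P w' ! p = w' ! p" using True by simp
      moreover have "w' ! p < (take P B @ replicate (h - P - m) (Suc x)) ! p"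
        using bw' True mh Ph by auto
      moreover have "(take P B @ replicate (h - P - m) (Suc x)) ! p = B ! p"
        using True Ph unfolding h_def by (simp add: nth_append)
      moreover have "length (take P w') = P" using lw' mh Ph by simp
      ultimately show ?thesis using split True by (simp add: nth_append)
    next
      case False
      have lt: "length (take P w') = P" using lw' mh Ph by simp
      have "?psi cs ! p = merge x cs (drop P w') ! (p - P)"
        using split False lt by (simp add: nth_append)
      have xd: "x \<notin> set (drop P w')" using xw' in_set_dropD by fastforce
      note mp2 = merge_props[OF xd hyp2]
      have "p - P < length (merge x cs (drop P w'))"
        using mp2 lcs p False by simp
      hence "?psi cs ! p \<in> set (merge x cs (drop P w'))" using \<open>?psi cs ! p = _\<close> by simp
      also have "set (merge x cs (drop P w')) = set_mset (mset (drop P w') + replicate_mset (length (filter id cs)) x)"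
        using mp2 by (metis set_mset_mset)
      finally have "?psi cs ! p \<in> set (drop P w') \<or> ?psi cs ! p = x"
        by (auto split: if_splits)
      moreover have "x < B ! p" using P2 p False by simp
      moreover have "y < x" if "y \<in> set (drop P w')" for y using w'lt in_set_dropD that by fastforce
      ultimately show ?thesis by fastforce
    qed
    have fl: "filter (\<lambda>y. y \<noteq> x) (?psi cs) = w'" using mp by simp
    have "invw (?psi cs) = invw w' + i"
    proof -
      have le: "\<forall>y\<in>set (?psi cs). y \<le> x" using ms xmax by (metis set_mset_mset)
      have "bst (map (\<lambda>y. y = x) (?psi cs)) = bst cs" using mp bst_append_replicate_False by simp
      thus ?thesis using inv_split[OF le] fl bcs by simp
    qed
    thus ?thesis using len ms bnd fl ph unfolding Wset_def h_def by auto
  qed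
  have "bij_betw ?phi ?A (Cq (h - P) m i)"
    by (rule bij_betw_byWitness[where f'="?psi"]) (use A B in auto)
  hence "card ?A = card (Cq (h - P) m i)" by (rule bij_betw_same_card)
  thus ?thesis unfolding qb_def Cq_def by simp
qed




lemma Wset_empty: "Wset B {#} = (if B = [] then {[]} else {})"
  unfolding Wset_def by auto

theorem G_pal: "sorted B \<Longrightarrow> \<exists>d. pal (dist (Wset B M) invw) d"
proof (induction "size M" arbitrary: B M rule: less_induct)
  case less
  show ?case
  proof (cases "M = {#}")
    case True
    show ?thesis
    proof (cases "B = []")
      case True
      have "pal (dist (Wset B M) invw) 0" using \<open>M = {#}\<close> True
        unfolding pal_def dist_def by (auto simp: Wset_empty)
      thus ?thesis by blast
    next
      case False
      have "pal (dist (Wset B M) invw) 0" using \<open>M = {#}\<close> False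
        unfolding pal_def dist_def by (auto simp: Wset_empty)
      thus ?thesis by blast
    qed
  next
    case Mne: False
    define x where "x = Max (set_mset M)"
    define m where "m = count M x"
    define h where "h = length B"
    define P where "P = length (takeWhile (\<lambda>b. b \<le> x) B)"
    define M' where "M' = filter_mset (\<lambda>y. y \<noteq> x) M"
    define B' where "B' = take P B @ replicate (h - P - m) (Suc x)"
    have xmax: "\<forall>y\<in>#M. y \<le> x" unfolding x_def by simp
    have xin: "x \<in># M" unfolding x_def using Mne by simp
    have mpos: "m > 0" unfolding m_def using xin by simp
    have Ph: "P \<le> h" unfolding P_def h_def by (rule length_takeWhile_le)
    have P1: "\<forall>p<P. B!p \<le> x"
      unfolding P_def by (metis nth_mem set_takeWhileD takeWhile_nth)
    have P2: "\<forall>p. P \<le> p \<and> p < h \<longrightarrow> x < B!p"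
    proof (intro allI impI)
      fix p assume p: "P \<le> p \<and> p < h"
      hence "P < length B" unfolding h_def by simp
      hence "\<not> B ! P \<le> x" unfolding P_def by (rule nth_length_takeWhile)
      moreover have "B ! P \<le> B ! p" using less.prems p unfolding h_def by (simp add: sorted_nth_mono)
      ultimately show "x < B ! p" by simp
    qed
    have sizeM': "size M' < size M"
    proof -
      have "size M = size (M' + replicate_mset (count M x) x)" unfolding M'_def
        by (subst mset_split_max[of x M, symmetric]) (rule refl)
      thus ?thesis using mpos unfolding m_def by simp
    qed
    have sB': "sorted B'"
    proof -
      have "sorted (take P B)" using less.prems by (simp add: sorted_wrt_take)
      moreover have "\<forall>y\<in>set (take P B). y \<le> x" using P1 by (auto simp: in_set_conv_nth)
      ultimately show ?thesis unfolding B'_def by (auto simp: sorted_append)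
    qed
    obtain d' where d': "pal (dist (Wset B' M') invw) d'" using less.hyps[OF sizeM' sB'] by blast
    show ?thesis
    proof (cases "m \<le> h - P")
      case False
      have "Wset B M = {}"
      proof (rule equals0I)
        fix w assume w: "w \<in> Wset B M"
        hence lw: "length w = h" and mw: "mset w = M" and bw: "\<forall>p<h. w!p < B!p"
          unfolding Wset_def h_def by auto
        have "\<forall>p<P. w!p \<noteq> x" using bw P1 Ph by (metis le_less_trans less_le_trans nat_neq_iff)
        hence "x \<notin> set (take P w)" by (auto simp: in_set_conv_nth)
        hence c0: "count (mset (take P w)) x = 0" by (simp add: count_eq_zero_iff)
        have c1: "count (mset (drop P w)) x \<le> h - P"
          using lw by (metis count_le_size length_drop size_mset le_trans order_refl)
        have "mset w = mset (take P w) + mset (drop P w)"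
          by (metis append_take_drop_id mset_append)
        hence "count M x = count (mset (take P w)) x + count (mset (drop P w)) x" using mw by simp
        hence "count M x \<le> h - P" using c0 c1 by linarith
        thus False using False m_def by simp
      qed
      hence "pal (dist (Wset B M) invw) 0" unfolding pal_def dist_def by simp
      thus ?thesis by blast
    next
      case mh: True
      have fib: "dist (Wset B M) invw k = (\<Sum>j\<le>k. dist (Wset B' M') invw j * qb (h - P) m (k - j))" for k
      proof (rule fibration[where f="filter (\<lambda>y. y \<noteq> x)"])
        show "finite (Wset B M)" "finite (Wset B' M')" by (rule Wset_finite)+
      next
        fix w assume w: "w \<in> Wset B M"
        hence lw: "length w = h" and mw: "mset w = M" and bw: "\<forall>p<h. w!p < B!p"
          unfolding Wset_def h_def by auto
        have wle: "\<forall>y\<in>set w. y \<le> x" using xmax mw by (metis set_mset_mset)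
        show "invw (filter (\<lambda>y. y \<noteq> x) w) \<le> invw w" using inv_split[OF wle] by simp
        have nx: "\<forall>p<P. w!p \<noteq> x" using bw P1 Ph by (metis le_less_trans less_le_trans nat_neq_iff)
        hence "x \<notin> set (take P w)" by (auto simp: in_set_conv_nth)
        hence tk: "filter (\<lambda>y. y \<noteq> x) (take P w) = take P w"
          by (auto simp: filter_id_conv)
        have fw: "filter (\<lambda>y. y \<noteq> x) w = take P w @ filter (\<lambda>y. y \<noteq> x) (drop P w)"
          by (metis append_take_drop_id filter_append tk)
        have mf: "mset (filter (\<lambda>y. y \<noteq> x) w) = M'" unfolding M'_def using mw by simp
        have "length (filter (\<lambda>y. y \<noteq> x) w) + count M x = h"
        proof -
          have "length (filter (\<lambda>y. y \<noteq> x) w) + length (filter (\<lambda>y. \<not> y \<noteq> x) w) = length w"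
            by (rule sum_length_filter_compl)
          moreover have "length (filter (\<lambda>y. \<not> y \<noteq> x) w) = count M x"
            using mw by (induction w arbitrary: M) auto
          ultimately show ?thesis using lw by simp
        qed
        hence lf: "length (filter (\<lambda>y. y \<noteq> x) w) = h - m" unfolding m_def by simp
        have lB': "length B' = h - m" unfolding B'_def using mh Ph by (simp add: h_def)
        have "\<forall>p<h - m. filter (\<lambda>y. y \<noteq> x) w ! p < B' ! p"
        proof (intro allI impI)
          fix p assume p: "p < h - m"
          show "filter (\<lambda>y. y \<noteq> x) w ! p < B' ! p"
          proof (cases "p < P")
            case True
            have "filter (\<lambda>y. y \<noteq> x) w ! p = w ! p" using fw True lw Ph by (simp add: nth_append)
            moreover have "B' ! p = B ! p" using True Ph unfolding B'_def h_def by (simp add: nth_append)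
            ultimately show ?thesis using bw True Ph by simp
          next
            case False
            have "B' ! p = Suc x" using False p Ph mh unfolding B'_def h_def by (simp add: nth_append)
            moreover have "filter (\<lambda>y. y \<noteq> x) w ! p \<in> set w" using p lf
              by (metis filter_is_subset nth_mem subsetD)
            ultimately show ?thesis using wle by fastforce
          qed
        qed
        thus "filter (\<lambda>y. y \<noteq> x) w \<in> Wset B' M'" using lf lB' mf unfolding Wset_def by simp
      next
        fix w' i assume "w' \<in> Wset B' M'"
        thus "card {w \<in> Wset B M. filter (\<lambda>y. y \<noteq> x) w = w' \<and> invw w = invw w' + i} = qb (h - P) m i"
          unfolding B'_def M'_def h_def
          by (rule fiber_card[OF xmax m_def P1[unfolded h_def] P2[unfolded h_def] Ph[unfolded h_def] mh[unfolded h_def]])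
      qed
      have "pal (\<lambda>k. \<Sum>j\<le>k. dist (Wset B' M') invw j * qb (h - P) m (k - j)) (d' + m * (h - P - m))"
        by (rule conv_pal[OF d' qb_pal])
      moreover have "dist (Wset B M) invw = (\<lambda>k. \<Sum>j\<le>k. dist (Wset B' M') invw j * qb (h - P) m (k - j))"
        by (rule ext) (rule fib)
      ultimately have "pal (dist (Wset B M) invw) (d' + m * (h - P - m))" by simp
      thus ?thesis by blast
    qed
  qed
qed




lemma lex_first_diff:
  fixes xs ys :: "nat list"
  shows "length xs = length ys \<Longrightarrow> i < length xs \<Longrightarrow> \<forall>r<i. xs!r = ys!r \<Longrightarrow> xs!i \<noteq> ys!i
    \<Longrightarrow> (xs < ys \<longleftrightarrow> xs!i < ys!i)"
proof (induction xs arbitrary: ys i)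
  case Nil thus ?case by simp
next
  case (Cons x xs)
  then obtain y ys' where ys: "ys = y # ys'" by (cases ys) auto
  show ?case
  proof (cases i)
    case 0 thus ?thesis using Cons.prems ys by auto
  next
    case (Suc i')
    have "x = y" using Cons.prems(3) ys Suc by (metis nth_Cons_0 zero_less_Suc)
    moreover have "xs < ys' \<longleftrightarrow> xs!i' < ys'!i'"
      using Cons.IH[of ys' i'] Cons.prems ys Suc by force
    ultimately show ?thesis using ys Suc by simp
  qed
qed

lemma lex_key:
  fixes A B :: "nat \<Rightarrow> nat" and la lb W big a b :: nat
  assumes "la < W" "lb < W" "\<forall>r<la. A r < big" "\<forall>r<lb. B r < big" "a \<noteq> b"
    "la < lb \<Longrightarrow> b < a" "lb < la \<Longrightarrow> a < b"
  shows "(let r0 = (LEAST r. \<not> r < la \<or> \<not> r < lb \<or> A r \<noteq> B r) in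
           ((\<not> r0 < la \<or> \<not> r0 < lb) \<and> b < a) \<or> (r0 < la \<and> r0 < lb \<and> B r0 < A r0))
     \<longleftrightarrow> (map (\<lambda>r. if r < lb then B r else big) [0..<W], b) < (map (\<lambda>r. if r < la then A r else big) [0..<W], a)"
proof -
  define D where "D r \<longleftrightarrow> \<not> r < la \<or> \<not> r < lb \<or> A r \<noteq> B r" for r
  define r0 where "r0 = (LEAST r. D r)"
  define ka where "ka = map (\<lambda>r. if r < la then A r else big) [0..<W]"
  define kb where "kb = map (\<lambda>r. if r < lb then B r else big) [0..<W]"
  have Dla: "D la" unfolding D_def by simp
  have Dlb: "D lb" unfolding D_def by simp
  have r0la: "r0 \<le> la" unfolding r0_def using Dla by (rule Least_le)
  have r0lb: "r0 \<le> lb" unfolding r0_def using Dlb by (rule Least_le)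
  have Dr0: "D r0" unfolding r0_def using Dla by (rule LeastI)
  have before: "\<not> D r" if "r < r0" for r using that unfolding r0_def by (rule not_less_Least)
  have eqb: "ka ! r = kb ! r" if "r < r0" for r
    using before[OF that] that r0la assms(1) unfolding D_def ka_def kb_def by auto
  have lens: "length ka = W" "length kb = W" unfolding ka_def kb_def by auto
  have r0W: "r0 < W" using r0la assms(1) by simp
  have goal: "(((\<not> r0 < la \<or> \<not> r0 < lb) \<and> b < a) \<or> (r0 < la \<and> r0 < lb \<and> B r0 < A r0))
      \<longleftrightarrow> (kb, b) < (ka, a)"
  proof (cases "r0 < la \<and> r0 < lb")
    case True
    hence ne: "A r0 \<noteq> B r0" using Dr0 unfolding D_def by simp
    have k1: "ka ! r0 = A r0" "kb ! r0 = B r0" using True r0W unfolding ka_def kb_def by auto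
    have "kb < ka \<longleftrightarrow> kb ! r0 < ka ! r0"
      by (rule lex_first_diff) (use lens r0W eqb k1 ne in auto)
    moreover have "kb \<noteq> ka" using k1 ne by metis
    ultimately show ?thesis using True k1 by (auto simp: less_prod_def')
  next
    case False
    show ?thesis
    proof (cases "la = lb")
      case True
      hence "r0 = la" using False r0la r0lb by simp
      have "ka = kb"
      proof (rule nth_equalityI)
        show "length ka = length kb" using lens by simp
        fix r assume "r < length ka"
        show "ka ! r = kb ! r"
        proof (cases "r < r0")
          case True thus ?thesis by (rule eqb)
        next
          case False thus ?thesis using \<open>r < length ka\<close> lens \<open>r0 = la\<close> \<open>la = lb\<close>
            unfolding ka_def kb_def by simp
        qed
      qed
      thus ?thesis using False by (auto simp: less_prod_def')
    next
      case ne: False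
      show ?thesis
      proof (cases "la < lb")
        case True
        hence r0: "r0 = la" using False r0la r0lb by simp
        have k1: "ka ! r0 = big" "kb ! r0 = B r0" using True r0 r0W unfolding ka_def kb_def by auto
        have "B r0 < big" using assms(4) r0 True by simp
        have "kb < ka \<longleftrightarrow> kb ! r0 < ka ! r0"
          by (rule lex_first_diff) (use lens r0W eqb k1 \<open>B r0 < big\<close> in auto)
        hence "kb < ka" using k1 \<open>B r0 < big\<close> by simp
        thus ?thesis using assms(6)[OF True] False by (auto simp: less_prod_def')
      next
        case False2: False
        hence lt: "lb < la" using ne by simp
        hence r0: "r0 = lb" using False r0la r0lb by simp
        have k1: "kb ! r0 = big" "ka ! r0 = A r0" using lt r0 r0W unfolding ka_def kb_def by auto
        have "A r0 < big" using assms(3) r0 lt by simp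
        have "ka < kb \<longleftrightarrow> ka ! r0 < kb ! r0"
          by (rule lex_first_diff) (use lens r0W eqb k1 \<open>A r0 < big\<close> in auto)
        hence "ka < kb" using k1 \<open>A r0 < big\<close> by simp
        hence "\<not> (kb, b) < (ka, a)" by (auto simp: less_prod_def')
        moreover have "\<not> b < a" using assms(7)[OF lt] by simp
        ultimately show ?thesis using False by auto
      qed
    qed
  qed
  show ?thesis using goal unfolding r0_def D_def ka_def kb_def Let_def by simp
qed




locale tab =
  fixes lam mu :: "nat list" and T :: "nat \<times> nat \<Rightarrow> nat"
  assumes shape: "is_shape lam" and TS: "T \<in> SSYT lam mu"
begin

abbreviation "hgt \<equiv> col_height lam"
definition "n = sum_list lam"
definition "big = Suc (length mu)"
definition col :: "(nat \<times> nat \<Rightarrow> nat) \<Rightarrow> nat \<Rightarrow> nat list" where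
  "col \<tau> j = map (\<lambda>i. \<tau> (i, j)) [0..<hgt j]"

lemma dec: "i \<le> i' \<Longrightarrow> i' < length lam \<Longrightarrow> lam ! i' \<le> lam ! i"
proof (cases "i = i'")
  case False
  assume "i \<le> i'" "i' < length lam"
  hence "i < i'" using False by simp
  moreover have "sorted_wrt (\<ge>) lam" using shape unfolding is_shape_def by simp
  ultimately show ?thesis using sorted_wrt_nth_less \<open>i' < length lam\<close> by fastforce
qed simp

lemma box_iff: "box lam (i, j) \<longleftrightarrow> i < hgt j"
proof
  assume b: "box lam (i, j)"
  hence il: "i < length lam" and jl: "j < lam ! i" unfolding box_def by auto
  have "\<forall>x\<in>set (take (Suc i) lam). j < x"
  proof
    fix x assume "x \<in> set (take (Suc i) lam)"
    then obtain k where k: "k < length (take (Suc i) lam)" "x = take (Suc i) lam ! k"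
      by (metis in_set_conv_nth)
    hence "k \<le> i" "x = lam ! k" by auto
    thus "j < x" using dec[OF \<open>k \<le> i\<close> il] jl by simp
  qed
  hence "filter (\<lambda>l. j < l) (take (Suc i) lam) = take (Suc i) lam" by (simp add: filter_id_conv)
  hence "length (filter (\<lambda>l. j < l) (take (Suc i) lam)) = Suc i" using il by simp
  moreover have "filter (\<lambda>l. j < l) lam = filter (\<lambda>l. j < l) (take (Suc i) lam) @ filter (\<lambda>l. j < l) (drop (Suc i) lam)"
    by (metis append_take_drop_id filter_append)
  ultimately show "i < hgt j" unfolding col_height_def by simp
next
  assume h: "i < hgt j"
  have il: "i < length lam" using h length_filter_le[of "\<lambda>l. j < l" lam]
    unfolding col_height_def by linarith
  show "box lam (i, j)"
  proof (rule ccontr)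
    assume "\<not> box lam (i, j)"
    hence "lam ! i \<le> j" using il unfolding box_def by auto
    have "\<forall>x\<in>set (drop i lam). \<not> j < x"
    proof
      fix x assume "x \<in> set (drop i lam)"
      then obtain k where k: "k < length (drop i lam)" "x = drop i lam ! k"
        by (metis in_set_conv_nth)
      hence "x = lam ! (i + k)" "i + k < length lam" using il by auto
      thus "\<not> j < x" using dec[of i "i+k"] \<open>lam ! i \<le> j\<close> by auto
    qed
    hence "filter (\<lambda>l. j < l) (drop i lam) = []" by (simp add: filter_empty_conv)
    moreover have "filter (\<lambda>l. j < l) lam = filter (\<lambda>l. j < l) (take i lam) @ filter (\<lambda>l. j < l) (drop i lam)"
      by (metis append_take_drop_id filter_append)
    ultimately have "hgt j \<le> i" unfolding col_height_def
      using length_filter_le[of "\<lambda>l. j < l" "take i lam"] by simp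
    thus False using h by simp
  qed
qed

lemma hgt_le: "hgt j \<le> length lam"
  unfolding col_height_def by simp

lemma hgt_mono: "hgt (Suc j) \<le> hgt j"
proof (rule ccontr)
  assume "\<not> hgt (Suc j) \<le> hgt j"
  hence "box lam (hgt j, Suc j)" using box_iff by simp
  hence "box lam (hgt j, j)" unfolding box_def by simp
  thus False using box_iff by simp
qed

lemma box_n: "box lam (i, j) \<Longrightarrow> j < n"
  unfolding box_def n_def using elem_le_sum_list[of i lam] by simp

lemma row_lt: "a < length lam \<Longrightarrow> b < length lam \<Longrightarrow> lam ! a < lam ! b \<Longrightarrow> b < a"
proof (rule ccontr)
  assume "a < length lam" "b < length lam" "lam ! a < lam ! b" "\<not> b < a"
  thus False using dec[of a b] by simp
qed

lemma boxes_finite: "finite {c. box lam c}"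
proof (rule finite_subset[of _ "{..<length lam} \<times> {..<n}"])
  show "{c. box lam c} \<subseteq> {..<length lam} \<times> {..<n}"
  proof
    fix c assume "c \<in> {c. box lam c}"
    hence "box lam (fst c, snd c)" by simp
    thus "c \<in> {..<length lam} \<times> {..<n}" using box_n unfolding box_def by (cases c) auto
  qed
qed simp

lemma T_fill: "T \<in> fillings lam mu" and T_rs: "row_standard lam T" and T_cw: "col_weak lam T"
  using TS unfolding SSYT_def by auto

lemma T_val: "T c < big"
proof -
  have A: "\<forall>c. box lam c \<longrightarrow> T c \<in> {1..length mu}" and B: "\<forall>c. \<not> box lam c \<longrightarrow> T c = 0"
    using T_fill unfolding fillings_def by blast+
  show ?thesis
  proof (cases "box lam c")
    case True
    hence "T c \<in> {1..length mu}" using A by blast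
    thus ?thesis unfolding big_def by simp
  next
    case False
    hence "T c = 0" using B by blast
    thus ?thesis unfolding big_def by simp
  qed
qed

lemma col_T_sorted: "sorted (col T j)"
proof -
  have "T (i, j) \<le> T (Suc i, j)" if "Suc i < hgt j" for i
    using T_cw that box_iff unfolding col_weak_def by blast
  thus ?thesis unfolding col_def sorted_iff_nth_Suc by simp
qed

end




lemma finite_funs:
  assumes "finite S"
  shows "finite {\<tau>::'a \<Rightarrow> nat. (\<forall>c. c \<notin> S \<longrightarrow> \<tau> c = 0) \<and> (\<forall>c. \<tau> c < K)}"
proof (rule finite_subset)
  show "{\<tau>::'a \<Rightarrow> nat. (\<forall>c. c \<notin> S \<longrightarrow> \<tau> c = 0) \<and> (\<forall>c. \<tau> c < K)}
     \<subseteq> (\<lambda>g c. if c \<in> S then g c else 0) ` (S \<rightarrow>\<^sub>E {..<K})"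
  proof
    fix \<tau> :: "'a \<Rightarrow> nat" assume t: "\<tau> \<in> {\<tau>. (\<forall>c. c \<notin> S \<longrightarrow> \<tau> c = 0) \<and> (\<forall>c. \<tau> c < K)}"
    have "\<tau> = (\<lambda>c. if c \<in> S then restrict \<tau> S c else 0)" using t by (auto simp: fun_eq_iff)
    moreover have "restrict \<tau> S \<in> S \<rightarrow>\<^sub>E {..<K}" using t by auto
    ultimately show "\<tau> \<in> (\<lambda>g c. if c \<in> S then g c else 0) ` (S \<rightarrow>\<^sub>E {..<K})" by blast
  qed
  show "finite ((\<lambda>g c. if c \<in> S then g c else 0) ` (S \<rightarrow>\<^sub>E {..<K}))"
    using assms by (intro finite_imageI finite_PiE) auto
qed

context tab
begin

definition F :: "nat \<Rightarrow> (nat \<times> nat \<Rightarrow> nat) set" where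
  "F j0 = {\<tau>. (\<forall>i j. (\<not> box lam (i, j) \<or> j < j0) \<longrightarrow> \<tau> (i, j) = 0)
     \<and> (\<forall>i j. j0 \<le> j \<longrightarrow> box lam (i, Suc j) \<longrightarrow> \<tau> (i, j) < \<tau> (i, Suc j))
     \<and> (\<forall>j\<ge>j0. mset (col \<tau> j) = mset (col T j))}"

definition invf :: "nat \<Rightarrow> (nat \<times> nat \<Rightarrow> nat) \<Rightarrow> nat" where
  "invf j0 \<tau> = card {(c, c'). inv_pair lam \<tau> c c' \<and> j0 \<le> snd c}"

definition colinv :: "nat \<Rightarrow> (nat \<times> nat \<Rightarrow> nat) \<Rightarrow> nat" where
  "colinv j0 \<tau> = card {(c, c'). inv_pair lam \<tau> c c' \<and> snd c = j0}"

definition cut :: "nat \<Rightarrow> (nat \<times> nat \<Rightarrow> nat) \<Rightarrow> (nat \<times> nat \<Rightarrow> nat)" where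
  "cut j0 \<tau> = (\<lambda>(i, j). if j = j0 then 0 else \<tau> (i, j))"

definition key :: "(nat \<times> nat \<Rightarrow> nat) \<Rightarrow> nat \<Rightarrow> nat \<Rightarrow> nat list" where
  "key \<tau> j0 a = map (\<lambda>r. if r < lam ! a - Suc j0 then \<tau> (a, Suc j0 + r) else big) [0..<n]"

lemma inv_pair_box: "inv_pair lam \<tau> c c' \<Longrightarrow> box lam c \<and> box lam c' \<and> snd c = snd c'"
  unfolding inv_pair_def by simp

lemma pairs_finite: "finite {(c, c'). inv_pair lam \<tau> c c' \<and> P c c'}"
proof (rule finite_subset)
  show "{(c, c'). inv_pair lam \<tau> c c' \<and> P c c'} \<subseteq> {c. box lam c} \<times> {c. box lam c}"
    using inv_pair_box by auto
  show "finite ({c. box lam c} \<times> {c. box lam c})" using boxes_finite by simp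
qed

lemma inv_pair_cong:
  assumes "\<forall>i j. snd c \<le> j \<longrightarrow> \<tau> (i, j) = \<tau>2 (i, j)"
  shows "inv_pair lam \<tau> c c' = inv_pair lam \<tau>2 c c'"
proof (cases "snd c = snd c'")
  case True
  have e: "\<tau> (right r c) = \<tau>2 (right r c)" "\<tau> (right r c') = \<tau>2 (right r c')" for r
    unfolding right_def using assms[rule_format, where i="fst c" and j="snd c + r"] assms[rule_format, where i="fst c'" and j="snd c + r"] True
    by simp_all
  have e0: "\<tau> c = \<tau>2 c" "\<tau> c' = \<tau>2 c'"
    using e[of 0] unfolding right_def by simp_all
  have d: "differs lam \<tau> c c' = differs lam \<tau>2 c c'"
    unfolding differs_def using e by (simp add: fun_eq_iff)
  show ?thesis unfolding inv_pair_def d e e0 ..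
next
  case False thus ?thesis unfolding inv_pair_def by simp
qed

lemma invf_split: "invf j0 \<tau> = invf (Suc j0) (cut j0 \<tau>) + colinv j0 \<tau>"
proof -
  have eq: "inv_pair lam (cut j0 \<tau>) c c' = inv_pair lam \<tau> c c'" if "Suc j0 \<le> snd c" for c c'
    by (rule inv_pair_cong) (use that in \<open>auto simp: cut_def\<close>)
  have "{(c, c'). inv_pair lam \<tau> c c' \<and> j0 \<le> snd c} =
     {(c, c'). inv_pair lam (cut j0 \<tau>) c c' \<and> Suc j0 \<le> snd c} \<union> {(c, c'). inv_pair lam \<tau> c c' \<and> snd c = j0}"
    using eq by auto
  moreover have "{(c, c'). inv_pair lam (cut j0 \<tau>) c c' \<and> Suc j0 \<le> snd c} \<inter> {(c, c'). inv_pair lam \<tau> c c' \<and> snd c = j0} = {}"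
    by auto
  ultimately show ?thesis unfolding invf_def colinv_def
    by (simp add: card_Un_disjoint pairs_finite)
qed

lemma F_val: "\<tau> \<in> F j0 \<Longrightarrow> \<tau> c < big"
proof -
  assume t: "\<tau> \<in> F j0"
  have Fz: "\<forall>i j. (\<not> box lam (i, j) \<or> j < j0) \<longrightarrow> \<tau> (i, j) = 0"
    and Fm: "\<forall>j\<ge>j0. mset (col \<tau> j) = mset (col T j)" using t unfolding F_def by blast+
  obtain i j where c: "c = (i, j)" by (cases c)
  show ?thesis
  proof (cases "box lam (i, j) \<and> j0 \<le> j")
    case True
    hence "i < hgt j" using box_iff by simp
    hence "\<tau> (i, j) \<in> set (col \<tau> j)" unfolding col_def by simp
    also have "set (col \<tau> j) = set (col T j)"
      using arg_cong[OF Fm[rule_format, of j], of set_mset] True by simp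
    finally obtain i' where "\<tau> (i, j) = T (i', j)" unfolding col_def by auto
    thus ?thesis using T_val c by simp
  next
    case False
    hence "\<tau> (i, j) = 0" using Fz by auto
    thus ?thesis using c big_def by simp
  qed
qed

lemma F_finite: "finite (F j0)"
proof (rule finite_subset)
  show "F j0 \<subseteq> {\<tau>. (\<forall>c. c \<notin> {c. box lam c} \<longrightarrow> \<tau> c = 0) \<and> (\<forall>c. \<tau> c < big)}"
  proof
    fix \<tau> assume t: "\<tau> \<in> F j0"
    have "\<tau> c = 0" if "\<not> box lam c" for c
      using t that unfolding F_def by (cases c) auto
    thus "\<tau> \<in> {\<tau>. (\<forall>c. c \<notin> {c. box lam c} \<longrightarrow> \<tau> c = 0) \<and> (\<forall>c. \<tau> c < big)}"
      using F_val[OF t] by auto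
  qed
  show "finite {\<tau>. (\<forall>c. c \<notin> {c. box lam c} \<longrightarrow> \<tau> c = 0) \<and> (\<forall>c. \<tau> c < big)}"
    by (rule finite_funs) (rule boxes_finite)
qed

lemma F_top: "F n = {\<lambda>_. 0}"
proof
  show "F n \<subseteq> {\<lambda>_. 0}"
  proof
    fix \<tau> assume t: "\<tau> \<in> F n"
    have "\<tau> (i, j) = 0" for i j
    proof (cases "box lam (i, j)")
      case True thus ?thesis using t box_n unfolding F_def by auto
    next
      case False thus ?thesis using t unfolding F_def by auto
    qed
    thus "\<tau> \<in> {\<lambda>_. 0}" by (auto simp: fun_eq_iff)
  qed
  have h0: "hgt j = 0" if "n \<le> j" for j
  proof (rule ccontr)
    assume "hgt j \<noteq> 0"
    hence "box lam (0, j)" using box_iff by simp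
    thus False using box_n that by fastforce
  qed
  have "(\<lambda>_. 0) \<in> F n"
    unfolding F_def
  proof (intro CollectI conjI allI impI)
    fix i j assume "n \<le> j" "box lam (i, Suc j)"
    thus "(0::nat) < 0" using box_n by fastforce
  next
    fix j assume "n \<le> j"
    thus "mset (col (\<lambda>_. 0) j) = mset (col T j)" unfolding col_def using h0 by simp
  qed simp
  thus "{\<lambda>_. 0} \<subseteq> F n" by simp
qed

lemma invf_top: "invf n \<tau> = 0"
proof -
  have e: "{(c, c'). inv_pair lam \<tau> c c' \<and> n \<le> snd c} = {}"
  proof (rule equals0I)
    fix p assume "p \<in> {(c, c'). inv_pair lam \<tau> c c' \<and> n \<le> snd c}"
    then obtain i j c' where "inv_pair lam \<tau> (i, j) c'" "n \<le> j" by auto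
    hence "box lam (i, j)" "n \<le> j" using inv_pair_box by auto
    thus False using box_n by fastforce
  qed
  show ?thesis unfolding invf_def e by simp
qed

end



context tab
begin

lemma inv_char:
  assumes vb: "\<forall>c. \<tau> c < big" and a: "a < hgt j0" and b: "b < hgt j0" and ab: "a \<noteq> b"
  shows "inv_pair lam \<tau> (a, j0) (b, j0) \<longleftrightarrow> \<tau> (a, j0) < \<tau> (b, j0) \<and> (key \<tau> j0 b, b) < (key \<tau> j0 a, a)"
proof -
  have ba: "box lam (a, j0)" and bb: "box lam (b, j0)" using a b box_iff by auto
  hence al: "a < length lam" "j0 < lam ! a" and bl: "b < length lam" "j0 < lam ! b"
    unfolding box_def by auto
  define la where "la = lam ! a - Suc j0"
  define lb where "lb = lam ! b - Suc j0"
  define A where "A r = \<tau> (a, Suc j0 + r)" for r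
  define B where "B r = \<tau> (b, Suc j0 + r)" for r
  define D where "D r \<longleftrightarrow> \<not> r < la \<or> \<not> r < lb \<or> A r \<noteq> B r" for r
  have bxa: "box lam (a, j0 + Suc r) \<longleftrightarrow> r < la" for r unfolding box_def la_def using al by auto
  have bxb: "box lam (b, j0 + Suc r) \<longleftrightarrow> r < lb" for r unfolding box_def lb_def using bl by auto
  have dS: "differs lam \<tau> (a, j0) (b, j0) (Suc k) \<longleftrightarrow> D k" for k
    unfolding differs_def right_def D_def A_def B_def using bxa bxb by simp
  have LS: "(LEAST r. 1 \<le> r \<and> differs lam \<tau> (a, j0) (b, j0) r) = Suc (LEAST r. D r)"
  proof (rule Least_Suc2)
    show "1 \<le> Suc la \<and> differs lam \<tau> (a, j0) (b, j0) (Suc la)" using dS D_def by simp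
    show "D la" unfolding D_def by simp
    show "\<not> (1 \<le> (0::nat) \<and> differs lam \<tau> (a, j0) (b, j0) 0)" by simp
    show "\<forall>k. (1 \<le> Suc k \<and> differs lam \<tau> (a, j0) (b, j0) (Suc k)) = D k" using dS by simp
  qed
  define r0 where "r0 = (LEAST r. D r)"
  have rc: "right (Suc r0) (a, j0) = (a, j0 + Suc r0)" "right (Suc r0) (b, j0) = (b, j0 + Suc r0)"
    unfolding right_def by simp_all
  have tA: "\<tau> (a, j0 + Suc r0) = A r0" and tB: "\<tau> (b, j0 + Suc r0) = B r0"
    unfolding A_def B_def by simp_all
  have ip: "inv_pair lam \<tau> (a, j0) (b, j0) \<longleftrightarrow> \<tau> (a, j0) < \<tau> (b, j0) \<and>
     (((\<not> r0 < la \<or> \<not> r0 < lb) \<and> b < a) \<or> (r0 < la \<and> r0 < lb \<and> B r0 < A r0))"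
    unfolding inv_pair_def Let_def LS r0_def[symmetric] rc tA tB bxa bxb using ba bb ab by auto
  have lk: "(let r0 = (LEAST r. \<not> r < la \<or> \<not> r < lb \<or> A r \<noteq> B r) in
           ((\<not> r0 < la \<or> \<not> r0 < lb) \<and> b < a) \<or> (r0 < la \<and> r0 < lb \<and> B r0 < A r0))
     \<longleftrightarrow> (map (\<lambda>r. if r < lb then B r else big) [0..<n], b) < (map (\<lambda>r. if r < la then A r else big) [0..<n], a)"
  proof (rule lex_key)
    show "la < n" unfolding la_def n_def using al elem_le_sum_list[of a lam] by simp
    show "lb < n" unfolding lb_def n_def using bl elem_le_sum_list[of b lam] by simp
    show "\<forall>r<la. A r < big" "\<forall>r<lb. B r < big" unfolding A_def B_def using vb by auto
    show "a \<noteq> b" by (rule ab)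
    show "b < a" if "la < lb" using row_lt[OF al(1) bl(1)] that al bl unfolding la_def lb_def by simp
    show "a < b" if "lb < la" using row_lt[OF bl(1) al(1)] that al bl unfolding la_def lb_def by simp
  qed
  have ka: "key \<tau> j0 a = map (\<lambda>r. if r < la then A r else big) [0..<n]"
    unfolding key_def la_def A_def ..
  have kb: "key \<tau> j0 b = map (\<lambda>r. if r < lb then B r else big) [0..<n]"
    unfolding key_def lb_def B_def ..
  show ?thesis using ip lk unfolding ka kb Let_def D_def[symmetric] r0_def[symmetric] by simp
qed

end



lemma invw_card: "invw w = card {(p, q). p < q \<and> q < length w \<and> w ! q < w ! p}"
proof (induction w)
  case Nil thus ?case by simp
next
  case (Cons x w)
  let ?S = "\<lambda>w. {(p, q). p < q \<and> q < length w \<and> w ! q < w ! p}"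
  have eq: "?S (x # w) = (\<lambda>q. (0, Suc q)) ` {q. q < length w \<and> w ! q < x} \<union> (\<lambda>(p, q). (Suc p, Suc q)) ` ?S w"
  proof (rule set_eqI)
    fix pq :: "nat \<times> nat"
    obtain p q where pq: "pq = (p, q)" by (cases pq)
    show "pq \<in> ?S (x # w) \<longleftrightarrow> pq \<in> (\<lambda>q. (0, Suc q)) ` {q. q < length w \<and> w ! q < x} \<union> (\<lambda>(p, q). (Suc p, Suc q)) ` ?S w"
    proof
      assume "pq \<in> ?S (x # w)"
      hence h: "p < q" "q < Suc (length w)" "(x # w) ! q < (x # w) ! p" using pq by auto
      then obtain q' where q': "q = Suc q'" by (cases q) auto
      show "pq \<in> (\<lambda>q. (0, Suc q)) ` {q. q < length w \<and> w ! q < x} \<union> (\<lambda>(p, q). (Suc p, Suc q)) ` ?S w"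
      proof (cases p)
        case 0 thus ?thesis using h q' pq by auto
      next
        case (Suc p')
        hence "(p', q') \<in> ?S w" using h q' by auto
        thus ?thesis using pq Suc q' by (auto intro!: image_eqI[where x="(p', q')"])
      qed
    next
      assume "pq \<in> (\<lambda>q. (0, Suc q)) ` {q. q < length w \<and> w ! q < x} \<union> (\<lambda>(p, q). (Suc p, Suc q)) ` ?S w"
      thus "pq \<in> ?S (x # w)" by auto
    qed
  qed
  have d: "(\<lambda>q. (0::nat, Suc q)) ` {q. q < length w \<and> w ! q < x} \<inter> (\<lambda>(p, q). (Suc p, Suc q)) ` ?S w = {}"
    by auto
  have f1: "finite {q. q < length w \<and> w ! q < x}" by simp
  have f2: "finite (?S w)" by (rule finite_subset[of _ "{..<length w} \<times> {..<length w}"]) auto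
  have i1: "inj_on (\<lambda>q. (0::nat, Suc q)) {q. q < length w \<and> w ! q < x}" by (auto simp: inj_on_def)
  have i2: "inj_on (\<lambda>(p, q). (Suc p, Suc q)) (?S w)" by (auto simp: inj_on_def)
  have "card (?S (x # w)) = card {q. q < length w \<and> w ! q < x} + card (?S w)"
    unfolding eq using d f1 f2 i1 i2 by (simp add: card_Un_disjoint card_image)
  moreover have "length (filter (\<lambda>b. b < x) w) = card {q. q < length w \<and> w ! q < x}"
    by (rule length_filter_conv_card)
  ultimately show ?case using Cons.IH by simp
qed

lemma lex_le_hd: "(xs::nat list) \<le> ys \<Longrightarrow> xs \<noteq> [] \<Longrightarrow> ys \<noteq> [] \<Longrightarrow> xs ! 0 \<le> ys ! 0"
  by (cases xs; cases ys) auto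

context tab
begin

definition Kf :: "(nat \<times> nat \<Rightarrow> nat) \<Rightarrow> nat \<Rightarrow> nat \<Rightarrow> nat list \<times> nat" where
  "Kf \<tau>' j0 a = (key \<tau>' j0 a, a)"

definition rs :: "(nat \<times> nat \<Rightarrow> nat) \<Rightarrow> nat \<Rightarrow> nat list" where
  "rs \<tau>' j0 = sort_key (Kf \<tau>' j0) [0..<hgt j0]"

definition bnd :: "(nat \<times> nat \<Rightarrow> nat) \<Rightarrow> nat \<Rightarrow> nat \<Rightarrow> nat" where
  "bnd \<tau>' j0 a = (if a < hgt (Suc j0) then \<tau>' (a, Suc j0) else big)"

definition pos :: "(nat \<times> nat \<Rightarrow> nat) \<Rightarrow> nat \<Rightarrow> nat \<Rightarrow> nat" where
  "pos \<tau>' j0 a = (THE p. p < hgt j0 \<and> rs \<tau>' j0 ! p = a)"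

definition Bstar :: "nat \<Rightarrow> nat list" where
  "Bstar j0 = sort (col T (Suc j0) @ replicate (hgt j0 - hgt (Suc j0)) big)"

lemma rs_len: "length (rs \<tau>' j0) = hgt j0" unfolding rs_def by simp
lemma rs_distinct: "distinct (rs \<tau>' j0)" unfolding rs_def by simp
lemma rs_set: "set (rs \<tau>' j0) = {..<hgt j0}" unfolding rs_def by auto
lemma rs_lt: "p < hgt j0 \<Longrightarrow> rs \<tau>' j0 ! p < hgt j0"
  using rs_set rs_len by (metis lessThan_iff nth_mem)

lemma rs_mono: assumes "p < q" "q < hgt j0" shows "Kf \<tau>' j0 (rs \<tau>' j0 ! p) < Kf \<tau>' j0 (rs \<tau>' j0 ! q)"
proof -
  have s: "sorted (map (Kf \<tau>' j0) (rs \<tau>' j0))" unfolding rs_def by simp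
  have "Kf \<tau>' j0 (rs \<tau>' j0 ! p) \<le> Kf \<tau>' j0 (rs \<tau>' j0 ! q)"
    using sorted_nth_mono[OF s, of p q] assms rs_len by simp
  moreover have "rs \<tau>' j0 ! p \<noteq> rs \<tau>' j0 ! q"
    using rs_distinct assms rs_len by (simp add: nth_eq_iff_index_eq)
  ultimately show ?thesis unfolding Kf_def by (auto simp: less_prod_def')
qed

lemma pos_props: assumes "a < hgt j0" shows "pos \<tau>' j0 a < hgt j0 \<and> rs \<tau>' j0 ! (pos \<tau>' j0 a) = a"
proof -
  have "\<exists>!p. p < length (rs \<tau>' j0) \<and> rs \<tau>' j0 ! p = a"
    by (rule distinct_Ex1) (use rs_distinct rs_set assms in auto)
  hence "\<exists>!p. p < hgt j0 \<and> rs \<tau>' j0 ! p = a" using rs_len by simp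
  thus ?thesis unfolding pos_def by (rule theI')
qed

lemma pos_rs: assumes "p < hgt j0" shows "pos \<tau>' j0 (rs \<tau>' j0 ! p) = p"
proof -
  have a: "rs \<tau>' j0 ! p < hgt j0" using rs_lt[OF assms] .
  note pp = pos_props[OF a, of \<tau>']
  show ?thesis using pp assms rs_distinct rs_len by (metis nth_eq_iff_index_eq)
qed

lemma key0: assumes "a < hgt j0" shows "key \<tau>' j0 a ! 0 = bnd \<tau>' j0 a"
proof -
  have b: "box lam (a, j0)" using assms box_iff by simp
  hence al: "a < length lam" "j0 < lam ! a" unfolding box_def by auto
  have "0 < n" using box_n[OF b] by simp
  moreover have "(0 < lam ! a - Suc j0) \<longleftrightarrow> a < hgt (Suc j0)"
    using box_iff[of a "Suc j0"] al unfolding box_def by auto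
  ultimately show ?thesis unfolding key_def bnd_def by simp
qed

lemma key_ne: assumes "a < hgt j0" shows "key \<tau>' j0 a \<noteq> []"
proof -
  have "box lam (a, j0)" using assms box_iff by simp
  hence "0 < n" using box_n by fastforce
  thus ?thesis unfolding key_def by simp
qed

lemma bnd_sorted: "sorted (map (bnd \<tau>' j0) (rs \<tau>' j0))"
  unfolding sorted_iff_nth_mono
proof (intro allI impI)
  fix p q assume pq: "p \<le> q" "q < length (map (bnd \<tau>' j0) (rs \<tau>' j0))"
  hence q: "q < hgt j0" using rs_len by simp
  have p: "p < hgt j0" using pq q by simp
  have "Kf \<tau>' j0 (rs \<tau>' j0 ! p) \<le> Kf \<tau>' j0 (rs \<tau>' j0 ! q)"
    using rs_mono[of p q j0 \<tau>'] q pq(1) by (cases "p = q") auto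
  hence "key \<tau>' j0 (rs \<tau>' j0 ! p) \<le> key \<tau>' j0 (rs \<tau>' j0 ! q)"
    unfolding Kf_def by (auto simp: less_eq_prod_def)
  hence "key \<tau>' j0 (rs \<tau>' j0 ! p) ! 0 \<le> key \<tau>' j0 (rs \<tau>' j0 ! q) ! 0"
    using lex_le_hd key_ne rs_lt p q by blast
  thus "map (bnd \<tau>' j0) (rs \<tau>' j0) ! p \<le> map (bnd \<tau>' j0) (rs \<tau>' j0) ! q"
    using key0 rs_lt p q rs_len by simp
qed

lemma bnd_Bstar:
  assumes t': "\<tau>' \<in> F (Suc j0)"
  shows "map (bnd \<tau>' j0) (rs \<tau>' j0) = Bstar j0"
proof -
  have m: "mset (map (bnd \<tau>' j0) (rs \<tau>' j0)) = mset (map (bnd \<tau>' j0) [0..<hgt j0])"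
    unfolding rs_def by simp
  have hm: "hgt (Suc j0) \<le> hgt j0" by (rule hgt_mono)
  have "[0..<hgt j0] = [0..<hgt (Suc j0)] @ [hgt (Suc j0)..<hgt j0]"
    using hm by (metis le0 upt_add_eq_append le_add_diff_inverse)
  moreover have "map (bnd \<tau>' j0) [hgt (Suc j0)..<hgt j0] = map (\<lambda>_. big) [hgt (Suc j0)..<hgt j0]"
    by (rule map_cong) (auto simp: bnd_def)
  ultimately have "map (bnd \<tau>' j0) [0..<hgt j0] = col \<tau>' (Suc j0) @ replicate (hgt j0 - hgt (Suc j0)) big"
    unfolding col_def by (simp add: map_replicate_const bnd_def)
  hence "mset (map (bnd \<tau>' j0) (rs \<tau>' j0)) = mset (col T (Suc j0) @ replicate (hgt j0 - hgt (Suc j0)) big)"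
    using m t' unfolding F_def by simp
  thus ?thesis unfolding Bstar_def by (metis properties_for_sort bnd_sorted)
qed

end



context tab
begin

lemma key_cong: "(\<forall>i j. Suc j0 \<le> j \<longrightarrow> \<tau> (i, j) = \<tau>' (i, j)) \<Longrightarrow> key \<tau> j0 a = key \<tau>' j0 a"
  unfolding key_def by (intro map_cong refl) auto

lemma colinv_eq:
  assumes vb: "\<forall>c. \<tau> c < big" and ag: "\<forall>i j. Suc j0 \<le> j \<longrightarrow> \<tau> (i, j) = \<tau>' (i, j)"
  shows "colinv j0 \<tau> = invw (map (\<lambda>a. \<tau> (a, j0)) (rs \<tau>' j0))"
proof -
  let ?R = "rs \<tau>' j0"
  let ?w = "map (\<lambda>a. \<tau> (a, j0)) ?R"
  let ?h = "hgt j0"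
  let ?S = "{(p, q). p < q \<and> q < length ?w \<and> ?w ! q < ?w ! p}"
  let ?C = "{(c, c'). inv_pair lam \<tau> c c' \<and> snd c = j0}"
  let ?g = "\<lambda>(p, q). ((?R ! q, j0), (?R ! p, j0))"
  have lw: "length ?w = ?h" using rs_len by simp
  have K: "Kf \<tau>' j0 a = (key \<tau> j0 a, a)" for a unfolding Kf_def using key_cong[OF ag] by simp
  have ch: "inv_pair lam \<tau> (a, j0) (b, j0) \<longleftrightarrow> \<tau> (a, j0) < \<tau> (b, j0) \<and> Kf \<tau>' j0 b < Kf \<tau>' j0 a"
    if "a < ?h" "b < ?h" "a \<noteq> b" for a b
    using inv_char[OF vb that] K by simp
  have "?C = ?g ` ?S"
  proof
    show "?C \<subseteq> ?g ` ?S"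
    proof
      fix x assume x: "x \<in> ?C"
      then obtain a j b j' where xe: "x = ((a, j), (b, j'))" and ip: "inv_pair lam \<tau> (a, j) (b, j')" and j: "j = j0"
        by auto
      have "box lam (a, j)" "box lam (b, j')" "j = j'" "(a, j) \<noteq> (b, j')" using ip unfolding inv_pair_def by auto
      hence ab: "a < ?h" "b < ?h" "j' = j0" "a \<noteq> b" using box_iff j by auto
      have c2: "\<tau> (a, j0) < \<tau> (b, j0)" "Kf \<tau>' j0 b < Kf \<tau>' j0 a"
        using ch[OF ab(1,2,4)] ip j ab(3) by auto
      define p where "p = pos \<tau>' j0 b"
      define q where "q = pos \<tau>' j0 a"
      have pp: "p < ?h" "?R ! p = b" using pos_props[OF ab(2)] p_def by auto
      have qq: "q < ?h" "?R ! q = a" using pos_props[OF ab(1)] q_def by auto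
      have "p < q"
      proof (rule ccontr)
        assume "\<not> p < q"
        hence "q \<le> p" by simp
        hence "Kf \<tau>' j0 (?R ! q) \<le> Kf \<tau>' j0 (?R ! p)"
          using rs_mono[of q p j0 \<tau>'] pp by (cases "q = p") auto
        thus False using c2(2) pp qq by simp
      qed
      moreover have "?w ! q < ?w ! p" using c2(1) pp qq rs_len by simp
      ultimately have "(p, q) \<in> ?S" using qq lw by simp
      moreover have "x = ?g (p, q)" using xe j ab(3) pp qq by simp
      ultimately show "x \<in> ?g ` ?S" by blast
    qed
  next
    show "?g ` ?S \<subseteq> ?C"
    proof
      fix x assume "x \<in> ?g ` ?S"
      then obtain p q where pq: "p < q" "q < ?h" "?w ! q < ?w ! p" and xe: "x = ?g (p, q)"
        using lw by auto
      have p: "p < ?h" using pq by simp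
      have a: "?R ! q < ?h" "?R ! p < ?h" using rs_lt pq p by auto
      have ne: "?R ! q \<noteq> ?R ! p" using rs_distinct rs_len pq p by (simp add: nth_eq_iff_index_eq)
      have "\<tau> (?R ! q, j0) < \<tau> (?R ! p, j0)" using pq p rs_len by simp
      moreover have "Kf \<tau>' j0 (?R ! p) < Kf \<tau>' j0 (?R ! q)" using rs_mono pq by blast
      ultimately have "inv_pair lam \<tau> (?R ! q, j0) (?R ! p, j0)" using ch[OF a ne] by simp
      thus "x \<in> ?C" using xe by simp
    qed
  qed
  moreover have "inj_on ?g ?S"
  proof (rule inj_onI)
    fix x y assume x: "x \<in> ?S" and y: "y \<in> ?S" and e: "?g x = ?g y"
    obtain p q where xp: "x = (p, q)" by (cases x)
    obtain p' q' where yp: "y = (p', q')" by (cases y)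
    have "?R ! q = ?R ! q'" "?R ! p = ?R ! p'" using e xp yp by auto
    moreover have "q < ?h" "q' < ?h" "p < ?h" "p' < ?h" using x y xp yp lw by auto
    ultimately have "q = q'" "p = p'" using rs_distinct rs_len by (simp_all add: nth_eq_iff_index_eq)
    thus "x = y" using xp yp by simp
  qed
  ultimately have "card ?C = card ?S" by (simp add: card_image)
  thus ?thesis unfolding colinv_def invw_card[of ?w] .
qed

lemma cut_F: "\<tau> \<in> F j0 \<Longrightarrow> cut j0 \<tau> \<in> F (Suc j0)"
proof -
  assume t: "\<tau> \<in> F j0"
  have Fz: "\<forall>i j. (\<not> box lam (i, j) \<or> j < j0) \<longrightarrow> \<tau> (i, j) = 0"
    and Fr: "\<forall>i j. j0 \<le> j \<longrightarrow> box lam (i, Suc j) \<longrightarrow> \<tau> (i, j) < \<tau> (i, Suc j)"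
    and Fm: "\<forall>j\<ge>j0. mset (col \<tau> j) = mset (col T j)" using t unfolding F_def by blast+
  have cc: "col (cut j0 \<tau>) j = col \<tau> j" if "j \<noteq> j0" for j
    unfolding col_def cut_def using that by simp
  show ?thesis unfolding F_def
  proof (intro CollectI conjI allI impI)
    fix i j assume "\<not> box lam (i, j) \<or> j < Suc j0"
    thus "cut j0 \<tau> (i, j) = 0" using Fz unfolding cut_def by (cases "j = j0") auto
  next
    fix i j assume "Suc j0 \<le> j" "box lam (i, Suc j)"
    thus "cut j0 \<tau> (i, j) < cut j0 \<tau> (i, Suc j)" using Fr unfolding cut_def by auto
  next
    fix j assume "Suc j0 \<le> j"
    thus "mset (col (cut j0 \<tau>) j) = mset (col T j)" using Fm cc by simp
  qed
qed

end



context tab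
begin

lemma Bstar_len: "length (Bstar j0) = hgt j0"
  unfolding Bstar_def col_def using hgt_mono[of j0] by simp

lemma Bstar_sorted: "sorted (Bstar j0)"
  unfolding Bstar_def by simp

lemma map_pos: "map (\<lambda>a. w ! pos \<tau>' j0 a) (rs \<tau>' j0) = w" if "length w = hgt j0"
proof (rule nth_equalityI)
  show "length (map (\<lambda>a. w ! pos \<tau>' j0 a) (rs \<tau>' j0)) = length w" using that rs_len by simp
  fix p assume "p < length (map (\<lambda>a. w ! pos \<tau>' j0 a) (rs \<tau>' j0))"
  hence p: "p < hgt j0" using rs_len by simp
  show "map (\<lambda>a. w ! pos \<tau>' j0 a) (rs \<tau>' j0) ! p = w ! p" using pos_rs[OF p] p rs_len by simp
qed

lemma fiber:
  assumes t': "\<tau>' \<in> F (Suc j0)"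
  shows "card {\<tau> \<in> F j0. cut j0 \<tau> = \<tau>' \<and> invf j0 \<tau> = invf (Suc j0) \<tau>' + i}
       = dist (Wset (Bstar j0) (mset (col T j0))) invw i"
proof -
  let ?h = "hgt j0" and ?h1 = "hgt (Suc j0)" and ?R = "rs \<tau>' j0" and ?M0 = "mset (col T j0)"
  let ?A = "{\<tau> \<in> F j0. cut j0 \<tau> = \<tau>' \<and> invf j0 \<tau> = invf (Suc j0) \<tau>' + i}"
  let ?W = "{w \<in> Wset (Bstar j0) ?M0. invw w = i}"
  let ?phi = "\<lambda>\<tau>. map (\<lambda>a. \<tau> (a, j0)) ?R"
  let ?psi = "\<lambda>w. (\<lambda>(a, j). if j = j0 then (if a < ?h then w ! pos \<tau>' j0 a else 0) else \<tau>' (a, j))"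
  have Fz': "\<forall>i j. (\<not> box lam (i, j) \<or> j < Suc j0) \<longrightarrow> \<tau>' (i, j) = 0"
    and Fr': "\<forall>i j. Suc j0 \<le> j \<longrightarrow> box lam (i, Suc j) \<longrightarrow> \<tau>' (i, j) < \<tau>' (i, Suc j)"
    and Fm': "\<forall>j\<ge>Suc j0. mset (col \<tau>' j) = mset (col T j)" using t' unfolding F_def by blast+
  have BB: "Bstar j0 ! p = bnd \<tau>' j0 (?R ! p)" if "p < ?h" for p
    using bnd_Bstar[OF t'] that rs_len by (metis nth_map)
  have hm: "?h1 \<le> ?h" by (rule hgt_mono)
  have A1: "?phi \<tau> \<in> ?W \<and> ?psi (?phi \<tau>) = \<tau>" if tA: "\<tau> \<in> ?A" for \<tau>
  proof -
    have t: "\<tau> \<in> F j0" and ct: "cut j0 \<tau> = \<tau>'" and it: "invf j0 \<tau> = invf (Suc j0) \<tau>' + i" using tA by auto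
    have Fz: "\<forall>i j. (\<not> box lam (i, j) \<or> j < j0) \<longrightarrow> \<tau> (i, j) = 0"
      and Fr: "\<forall>i j. j0 \<le> j \<longrightarrow> box lam (i, Suc j) \<longrightarrow> \<tau> (i, j) < \<tau> (i, Suc j)"
      and Fm: "\<forall>j\<ge>j0. mset (col \<tau> j) = mset (col T j)" using t unfolding F_def by blast+
    have ag: "\<tau> (a, j) = \<tau>' (a, j)" if "j \<noteq> j0" for a j
      using fun_cong[OF ct, of "(a, j)"] that unfolding cut_def by simp
    have vb: "\<forall>c. \<tau> c < big" using F_val[OF t] by blast
    have ci: "colinv j0 \<tau> = i" using invf_split[of j0 \<tau>] it ct by simp
    have "colinv j0 \<tau> = invw (?phi \<tau>)" by (rule colinv_eq[OF vb]) (use ag in auto)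
    hence iw: "invw (?phi \<tau>) = i" using ci by simp
    have len: "length (?phi \<tau>) = length (Bstar j0)" using rs_len Bstar_len by simp
    have ms: "mset (?phi \<tau>) = ?M0"
    proof -
      have "mset (?phi \<tau>) = mset (map (\<lambda>a. \<tau> (a, j0)) [0..<?h])" unfolding rs_def by simp
      also have "\<dots> = mset (col \<tau> j0)" unfolding col_def ..
      finally show ?thesis using Fm by simp
    qed
    have bd: "\<forall>p<length (Bstar j0). ?phi \<tau> ! p < Bstar j0 ! p"
    proof (intro allI impI)
      fix p assume "p < length (Bstar j0)"
      hence p: "p < ?h" using Bstar_len by simp
      let ?a = "?R ! p"
      have a: "?a < ?h" using rs_lt[OF p] .
      show "?phi \<tau> ! p < Bstar j0 ! p"
      proof (cases "?a < ?h1")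
        case True
        hence "box lam (?a, Suc j0)" using box_iff by simp
        hence "\<tau> (?a, j0) < \<tau> (?a, Suc j0)" using Fr by blast
        thus ?thesis using BB[OF p] True ag[of "Suc j0" ?a] p rs_len unfolding bnd_def by simp
      next
        case False
        thus ?thesis using BB[OF p] vb p rs_len unfolding bnd_def by simp
      qed
    qed
    have "?phi \<tau> \<in> ?W" using len ms bd iw unfolding Wset_def by simp
    moreover have "?psi (?phi \<tau>) = \<tau>"
    proof (rule ext)
      fix x :: "nat \<times> nat"
      obtain a j where x: "x = (a, j)" by (cases x)
      show "?psi (?phi \<tau>) x = \<tau> x"
      proof (cases "j = j0")
        case True
        show ?thesis
        proof (cases "a < ?h")
          case True
          thus ?thesis using x \<open>j = j0\<close> pos_props[OF True, of \<tau>'] rs_len by simp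
        next
          case False
          hence "\<not> box lam (a, j0)" using box_iff by simp
          thus ?thesis using x \<open>j = j0\<close> False Fz by simp
        qed
      next
        case False thus ?thesis using x ag by simp
      qed
    qed
    ultimately show ?thesis by simp
  qed
  have A2: "?psi w \<in> ?A \<and> ?phi (?psi w) = w" if wW: "w \<in> ?W" for w
  proof -
    have lw: "length w = ?h" and mw: "mset w = ?M0" and bw: "\<forall>p<?h. w ! p < Bstar j0 ! p"
      and iw: "invw w = i" using wW Bstar_len unfolding Wset_def by auto
    have ph: "?phi (?psi w) = w"
    proof -
      have "?phi (?psi w) = map (\<lambda>a. w ! pos \<tau>' j0 a) ?R"
        by (rule map_cong) (use rs_lt rs_set in auto)
      thus ?thesis using map_pos[OF lw] by simp
    qed
    have inF: "?psi w \<in> F j0" unfolding F_def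
    proof (intro CollectI conjI allI impI)
      fix a j assume h: "\<not> box lam (a, j) \<or> j < j0"
      show "?psi w (a, j) = 0"
      proof (cases "j = j0")
        case True
        hence "\<not> a < ?h" using h box_iff by simp
        thus ?thesis using True by simp
      next
        case False thus ?thesis using h Fz' by auto
      qed
    next
      fix a j assume j: "j0 \<le> j" and b: "box lam (a, Suc j)"
      show "?psi w (a, j) < ?psi w (a, Suc j)"
      proof (cases "j = j0")
        case True
        hence a1: "a < ?h1" using b box_iff by simp
        hence a: "a < ?h" using hm by simp
        note pp = pos_props[OF a, of \<tau>']
        have "w ! pos \<tau>' j0 a < Bstar j0 ! pos \<tau>' j0 a" using bw pp by simp
        also have "\<dots> = \<tau>' (a, Suc j0)" using BB pp a1 unfolding bnd_def by simp
        finally show ?thesis using True a by simp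
      next
        case False thus ?thesis using Fr' j b by simp
      qed
    next
      fix j assume j: "j0 \<le> j"
      show "mset (col (?psi w) j) = mset (col T j)"
      proof (cases "j = j0")
        case True
        have "col (?psi w) j0 = map (\<lambda>a. w ! pos \<tau>' j0 a) [0..<?h]" unfolding col_def by simp
        hence "mset (col (?psi w) j0) = mset (map (\<lambda>a. w ! pos \<tau>' j0 a) ?R)" unfolding rs_def by simp
        thus ?thesis using map_pos[OF lw] mw True by simp
      next
        case False
        hence "col (?psi w) j = col \<tau>' j" unfolding col_def by simp
        thus ?thesis using Fm' False j by simp
      qed
    qed
    have ct: "cut j0 (?psi w) = \<tau>'"
    proof (rule ext)
      fix x :: "nat \<times> nat"
      obtain a j where x: "x = (a, j)" by (cases x)
      show "cut j0 (?psi w) x = \<tau>' x" using Fz' x unfolding cut_def by auto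
    qed
    have vb: "\<forall>c. ?psi w c < big" using F_val[OF inF] by blast
    have "colinv j0 (?psi w) = invw (?phi (?psi w))" by (rule colinv_eq[OF vb]) simp
    hence "invf j0 (?psi w) = invf (Suc j0) \<tau>' + i" using invf_split[of j0 "?psi w"] ct ph iw by simp
    thus ?thesis using inF ct ph by simp
  qed
  have "bij_betw ?phi ?A ?W"
    by (rule bij_betw_byWitness[where f'="?psi"]) (use A1 A2 in auto)
  hence "card ?A = card ?W" by (rule bij_betw_same_card)
  thus ?thesis unfolding dist_def .
qed

lemma F_pal: "j0 \<le> n \<Longrightarrow> \<exists>d. pal (dist (F j0) (invf j0)) d"
proof (induction "n - j0" arbitrary: j0)
  case 0
  hence j: "j0 = n" by simp
  have "pal (dist (F j0) (invf j0)) 0" unfolding j pal_def dist_def F_top invf_top by simp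
  thus ?case by blast
next
  case (Suc k)
  hence j: "j0 < n" "k = n - Suc j0" by auto
  obtain d where d: "pal (dist (F (Suc j0)) (invf (Suc j0))) d" using Suc.hyps(1)[OF j(2)] j by auto
  obtain e where e: "pal (dist (Wset (Bstar j0) (mset (col T j0))) invw) e"
    using G_pal[OF Bstar_sorted] by blast
  have fib: "dist (F j0) (invf j0) k = (\<Sum>j\<le>k. dist (F (Suc j0)) (invf (Suc j0)) j * dist (Wset (Bstar j0) (mset (col T j0))) invw (k - j))" for k
  proof (rule fibration[where f="cut j0"])
    show "finite (F j0)" "finite (F (Suc j0))" by (rule F_finite)+
    show "cut j0 a \<in> F (Suc j0)" if "a \<in> F j0" for a using cut_F that .
    show "invf (Suc j0) (cut j0 a) \<le> invf j0 a" for a using invf_split[of j0 a] by simp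
    show "card {a \<in> F j0. cut j0 a = b \<and> invf j0 a = invf (Suc j0) b + i} = dist (Wset (Bstar j0) (mset (col T j0))) invw i"
      if "b \<in> F (Suc j0)" for b i using fiber[OF that] .
  qed
  have "pal (\<lambda>k. \<Sum>j\<le>k. dist (F (Suc j0)) (invf (Suc j0)) j * dist (Wset (Bstar j0) (mset (col T j0))) invw (k - j)) (d + e)"
    by (rule conv_pal[OF d e])
  moreover have "dist (F j0) (invf j0) = (\<lambda>k. \<Sum>j\<le>k. dist (F (Suc j0)) (invf (Suc j0)) j * dist (Wset (Bstar j0) (mset (col T j0))) invw (k - j))"
    by (rule ext) (rule fib)
  ultimately show ?case by auto
qed

end



lemma lex_pointwise: "length xs = length ys \<Longrightarrow> \<forall>r<length xs. (xs::nat list) ! r \<le> ys ! r \<Longrightarrow> xs \<le> ys"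
proof (induction xs arbitrary: ys)
  case Nil thus ?case by simp
next
  case (Cons x xs)
  then obtain y ys' where ys: "ys = y # ys'" by (cases ys) auto
  have "x \<le> y" using Cons.prems ys by force
  moreover have "xs \<le> ys'" using Cons.IH[of ys'] Cons.prems ys by force
  ultimately show ?case using ys by (auto simp: order.order_iff_strict)
qed

lemma count_mset_filter: "count (mset xs) v = length (filter (\<lambda>y. v = y) xs)"
  by (induction xs) auto

context tab
begin

lemma count_col: "card {i. i < hgt j \<and> \<tau> (i, j) = v} = count (mset (col \<tau> j)) v"
proof -
  have "count (mset (col \<tau> j)) v = length (filter (\<lambda>y. v = y) (col \<tau> j))" by (rule count_mset_filter)
  also have "\<dots> = card {i. i < length (col \<tau> j) \<and> v = col \<tau> j ! i}" by (rule length_filter_conv_card)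
  also have "{i. i < length (col \<tau> j) \<and> v = col \<tau> j ! i} = {i. i < hgt j \<and> \<tau> (i, j) = v}"
    unfolding col_def by auto
  finally show ?thesis by simp
qed

lemma card_val: "card {c. box lam c \<and> \<tau> c = v} = (\<Sum>j<n. count (mset (col \<tau> j)) v)"
proof -
  have eq: "{c. box lam c \<and> \<tau> c = v} = (\<Union>j\<in>{..<n}. (\<lambda>i. (i, j)) ` {i. i < hgt j \<and> \<tau> (i, j) = v})"
  proof (rule set_eqI)
    fix c :: "nat \<times> nat"
    obtain i j where c: "c = (i, j)" by (cases c)
    show "c \<in> {c. box lam c \<and> \<tau> c = v} \<longleftrightarrow> c \<in> (\<Union>j\<in>{..<n}. (\<lambda>i. (i, j)) ` {i. i < hgt j \<and> \<tau> (i, j) = v})"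
      using box_iff[of i j] box_n[of i j] c by auto
  qed
  have "card {c. box lam c \<and> \<tau> c = v} = (\<Sum>j<n. card ((\<lambda>i. (i, j)) ` {i. i < hgt j \<and> \<tau> (i, j) = v}))"
    unfolding eq by (rule card_UN_disjoint) auto
  also have "\<dots> = (\<Sum>j<n. card {i. i < hgt j \<and> \<tau> (i, j) = v})"
    by (rule sum.cong) (auto simp: card_image inj_on_def)
  finally show ?thesis using count_col by simp
qed

lemma T_F: "T \<in> F 0"
proof -
  have "\<forall>c. \<not> box lam c \<longrightarrow> T c = 0" using T_fill unfolding fillings_def by blast
  thus ?thesis using T_rs unfolding F_def row_standard_def by auto
qed

lemma S_eq: "S_k_T lam mu T k = {\<tau> \<in> F 0. invf 0 \<tau> = k}"
proof -
  have Tz: "\<forall>c. \<not> box lam c \<longrightarrow> T c = 0" and Tv: "\<forall>c. box lam c \<longrightarrow> T c \<in> {1..length mu}"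
    and Tc: "\<forall>v\<in>{1..length mu}. card {c. box lam c \<and> T c = v} = mu ! (v - 1)"
    using T_fill unfolding fillings_def by blast+
  have ic: "invf 0 \<tau> = inv_count lam \<tau>" for \<tau> unfolding invf_def inv_count_def by simp
  have eqv: "(\<tau> \<in> fillings lam mu \<and> row_standard lam \<tau> \<and> st lam \<tau> = T) \<longleftrightarrow> \<tau> \<in> F 0" for \<tau>
  proof
    assume a: "\<tau> \<in> fillings lam mu \<and> row_standard lam \<tau> \<and> st lam \<tau> = T"
    have z: "\<forall>c. \<not> box lam c \<longrightarrow> \<tau> c = 0" using a unfolding fillings_def by blast
    have cs: "col T j = sort (col \<tau> j)" for j
    proof (rule nth_equalityI)
      show "length (col T j) = length (sort (col \<tau> j))" unfolding col_def by simp
      fix i assume "i < length (col T j)"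
      hence i: "i < hgt j" unfolding col_def by simp
      hence "box lam (i, j)" using box_iff by simp
      hence "st lam \<tau> (i, j) = sort (col \<tau> j) ! i" unfolding st_def col_def by simp
      thus "col T j ! i = sort (col \<tau> j) ! i" using a i unfolding col_def by simp
    qed
    show "\<tau> \<in> F 0" unfolding F_def using z a cs unfolding row_standard_def by auto
  next
    assume t: "\<tau> \<in> F 0"
    have Fz: "\<forall>i j. \<not> box lam (i, j) \<longrightarrow> \<tau> (i, j) = 0"
      and Fr: "\<forall>i j. box lam (i, Suc j) \<longrightarrow> \<tau> (i, j) < \<tau> (i, Suc j)"
      and Fm: "\<forall>j. mset (col \<tau> j) = mset (col T j)" using t unfolding F_def by auto
    have srt: "sort (col \<tau> j) = col T j" for j
      by (rule properties_for_sort) (use Fm col_T_sorted in auto)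
    have val: "\<tau> (i, j) \<in> {1..length mu}" if b: "box lam (i, j)" for i j
    proof -
      have "i < hgt j" using b box_iff by simp
      hence "\<tau> (i, j) \<in> set (col \<tau> j)" unfolding col_def by simp
      also have "set (col \<tau> j) = set (col T j)"
        using arg_cong[OF Fm[rule_format, of j], of set_mset] by simp
      finally obtain i' where "i' < hgt j" "\<tau> (i, j) = T (i', j)" unfolding col_def by auto
      moreover have "box lam (i', j)" using \<open>i' < hgt j\<close> box_iff by simp
      ultimately show ?thesis using Tv by auto
    qed
    have cnt: "card {c. box lam c \<and> \<tau> c = v} = card {c. box lam c \<and> T c = v}" for v
      unfolding card_val using Fm by simp
    have "\<tau> \<in> fillings lam mu" unfolding fillings_def
    proof (intro CollectI conjI allI impI ballI)
      fix c assume "\<not> box lam c" thus "\<tau> c = 0" using Fz by (cases c) auto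
    next
      fix c assume "box lam c" thus "\<tau> c \<in> {1..length mu}" using val by (cases c) auto
    next
      fix v assume "v \<in> {1..length mu}" thus "card {c. box lam c \<and> \<tau> c = v} = mu ! (v - 1)"
        using cnt Tc by simp
    qed
    moreover have "row_standard lam \<tau>" unfolding row_standard_def using Fr by simp
    moreover have "st lam \<tau> = T"
    proof (rule ext)
      fix x :: "nat \<times> nat"
      obtain i j where x: "x = (i, j)" by (cases x)
      show "st lam \<tau> x = T x"
      proof (cases "box lam (i, j)")
        case True
        hence "i < hgt j" using box_iff by simp
        thus ?thesis using True x srt[of j] unfolding st_def col_def by simp
      next
        case False thus ?thesis using x Tz unfolding st_def by simp
      qed
    qed
    ultimately show "\<tau> \<in> fillings lam mu \<and> row_standard lam \<tau> \<and> st lam \<tau> = T" by simp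
  qed
  show ?thesis unfolding S_k_T_def S_k_def using eqv ic by auto
qed

lemma T_inv0: "invf 0 T = 0"
proof -
  have "\<not> inv_pair lam T c c'" for c c'
  proof
    assume ip: "inv_pair lam T c c'"
    obtain a j where c: "c = (a, j)" by (cases c)
    obtain b j' where c': "c' = (b, j')" by (cases c')
    have bx: "box lam (a, j)" "box lam (b, j)" "j' = j" "a \<noteq> b" "T (a, j) < T (b, j)"
      using ip c c' unfolding inv_pair_def by auto
    have ab: "a < hgt j" "b < hgt j" using bx box_iff by auto
    have mono: "T (a', j2) \<le> T (b', j2)" if "a' \<le> b'" "b' < hgt j2" for a' b' j2
      using sorted_nth_mono[OF col_T_sorted[of j2], of a' b'] that unfolding col_def by simp
    have "a < b"
    proof (rule ccontr)
      assume "\<not> a < b" hence "b \<le> a" by simp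
      thus False using mono[of b a j] ab bx by simp
    qed
    have vb: "\<forall>c. T c < big" using T_val by blast
    have ch: "inv_pair lam T (a, j) (b, j) \<longleftrightarrow> T (a, j) < T (b, j) \<and> (key T j b, b) < (key T j a, a)"
      by (rule inv_char[OF vb ab bx(4)])
    have al: "a < length lam" "b < length lam" using bx unfolding box_def by auto
    have lab: "lam ! b \<le> lam ! a" using dec[of a b] \<open>a < b\<close> al by simp
    have "key T j a \<le> key T j b"
    proof (rule lex_pointwise)
      show "length (key T j a) = length (key T j b)" unfolding key_def by simp
      show "\<forall>r<length (key T j a). key T j a ! r \<le> key T j b ! r"
      proof (intro allI impI)
        fix r assume r: "r < length (key T j a)"
        hence rn: "r < n" unfolding key_def by simp
        show "key T j a ! r \<le> key T j b ! r"
        proof (cases "r < lam ! b - Suc j")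
          case True
          hence "r < lam ! a - Suc j" using lab by simp
          moreover have "box lam (b, Suc j + r)" using True al unfolding box_def by simp
          hence "b < hgt (Suc j + r)" using box_iff by simp
          ultimately show ?thesis using True rn mono[of a b "Suc j + r"] \<open>a < b\<close>
            unfolding key_def by simp
        next
          case False
          thus ?thesis using rn vb unfolding key_def by (simp add: less_imp_le)
        qed
      qed
    qed
    hence "\<not> (key T j b, b) < (key T j a, a)" using \<open>a < b\<close> by (auto simp: less_prod_def')
    thus False using ch ip c c' bx by simp
  qed
  thus ?thesis unfolding invf_def by simp
qed

lemma boxes_card: "card {c. box lam c} \<le> n"
proof -
  have eq: "{c. box lam c} = (\<Union>i\<in>{..<length lam}. (\<lambda>j. (i, j)) ` {..<lam ! i})"
    unfolding box_def by auto
  have "card {c. box lam c} \<le> (\<Sum>i<length lam. card ((\<lambda>j. (i, j)) ` {..<lam ! i}))"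
    unfolding eq by (rule card_UN_le) simp
  also have "\<dots> = (\<Sum>i<length lam. lam ! i)"
    by (rule sum.cong) (auto simp: card_image inj_on_def)
  also have "\<dots> = n" unfolding n_def by (simp add: sum_list_sum_nth atLeast0LessThan)
  finally show ?thesis .
qed

lemma inv_count_le: "inv_count lam \<tau> \<le> n ^ 2"
proof -
  have "inv_count lam \<tau> \<le> card ({c. box lam c} \<times> {c. box lam c})"
    unfolding inv_count_def
    by (rule card_mono) (use boxes_finite inv_pair_box in auto)
  also have "\<dots> = card {c. box lam c} * card {c. box lam c}" by (simp add: card_cartesian_product)
  also have "\<dots> \<le> n * n" using boxes_card by (simp add: mult_le_mono)
  finally show ?thesis by (simp add: power2_eq_square)
qed

theorem main:
  "\<forall>k \<le> degree (chi lam mu T).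
     card (S_k_T lam mu T k) = card (S_k_T lam mu T (degree (chi lam mu T) - k))"
proof -
  define g where "g k = card (S_k_T lam mu T k)" for k
  have gd: "g = dist (F 0) (invf 0)" unfolding g_def dist_def S_eq by (simp add: fun_eq_iff)
  obtain d where d: "pal g d" using F_pal[of 0] gd by auto
  have g0: "g 0 \<noteq> 0"
  proof -
    have "T \<in> {\<tau> \<in> F 0. invf 0 \<tau> = 0}" using T_F T_inv0 by simp
    moreover have "finite {\<tau> \<in> F 0. invf 0 \<tau> = 0}" using F_finite by simp
    ultimately have "card {\<tau> \<in> F 0. invf 0 \<tau> = 0} \<noteq> 0" by (auto simp: card_0_eq)
    thus ?thesis unfolding gd dist_def .
  qed
  have gdd: "g d \<noteq> 0" using pal_sym[OF d, of d] g0 by simp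
  have big0: "g k = 0" if "n ^ 2 < k" for k
  proof -
    have "S_k_T lam mu T k = {}"
    proof (rule equals0I)
      fix \<tau> assume "\<tau> \<in> S_k_T lam mu T k"
      hence "inv_count lam \<tau> = k" unfolding S_k_T_def S_k_def by simp
      thus False using inv_count_le[of \<tau>] that by simp
    qed
    thus ?thesis unfolding g_def by simp
  qed
  have coeff: "coeff (chi lam mu T) k = g k" for k
  proof -
    have "coeff (chi lam mu T) k = (\<Sum>j\<le>(sum_list lam)^2. if j = k then g j else 0)"
      unfolding chi_def g_def coeff_sum coeff_monom by (intro sum.cong refl)
    also have "\<dots> = (if k \<le> (sum_list lam)^2 then g k else 0)" by (simp add: sum.delta)
    finally show ?thesis using big0 unfolding n_def by auto
  qed
  have deg: "degree (chi lam mu T) = d"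
  proof (rule antisym)
    show "degree (chi lam mu T) \<le> d"
      by (rule degree_le) (use coeff pal_zero[OF d] in auto)
    show "d \<le> degree (chi lam mu T)" by (rule le_degree) (use coeff gdd in simp)
  qed
  show ?thesis
  proof (intro allI impI)
    fix k assume "k \<le> degree (chi lam mu T)"
    hence "k \<le> d" using deg by simp
    thus "card (S_k_T lam mu T k) = card (S_k_T lam mu T (degree (chi lam mu T) - k))"
      using pal_sym[OF d, of k] deg unfolding g_def by simp
  qed
qed

end

theorem mainTheorem5:
  fixes lam mu :: "nat list" and T :: "nat \<times> nat \<Rightarrow> nat"
  assumes "is_shape lam" and "is_content lam mu" and "T \<in> SSYT lam mu"
  shows "\<forall>k \<le> degree (chi lam mu T).
           card (S_k_T lam mu T k) = card (S_k_T lam mu T (degree (chi lam mu T) - k))"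
proof -
  interpret tab lam mu T using assms(1,3) by unfold_locales
  show ?thesis by (rule main)
qed

end
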